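(* Let $(p,f)$ be an SCF-RT generated by a drift-diffusion model (DDM) with constant or collapsing boundaries and underlying utility function $u:X\to\mathbb{R}$. Then for any $(x,y)\in D$, with $q=p(x,y)/p(y,x)$: if $u(x)\geq u(y)$ then $F(y,x)$ $q$-FSD $F(x,y)$, and if $u(x)>u(y)$ then $F(y,x)$ $q$-SFSD $F(x,y)$.
   Context: $X$ is a finite set of options; $C=\{(x,y): x,y\in X,\ x\neq y\}$; $D\subseteq C$ is a fixed non-empty set with $(x,y)\in D\Rightarrow (y,x)\in D$. An SCF $p$ assigns to each $(x,y)\in D$ a number $p(x,y)>0$ with $p(x,y)+p(y,x)=1$. An SCF-RT is a pair $(p,f)$ where $p$ is an SCF and $f$ assigns to each $(x,y)\in D$ a strictly positive density $f(x,y)$ on $\mathbb{R}^+$ with cdf $F(x,y)$ (response time distribution conditional on choosing $x$ from $\{x,y\}$). A DDM with underlying utility $u$ is given by drift rates $\mu(x,y)\in\mathbb{R}$ for $(x,y)\in D$ with $\mu(x,y)=-\mu(y,x)$ and $\mu(x,y)\geq0$ iff $u(x)-u(y)\geq0$, a diffusion coefficient $\sigma^2>0$, and a boundary function $b:\mathbb{R}^+\to\mathbb{R}^{++}$ which is either constant ($b\equiv B>0$, constant boundaries) or continuous and strictly decreasing with $\lim_{t\to\infty}b(t)=0$ (collapsing boundaries). For the pair $(x,y)$, the process $Z(0)=0$, $dZ(t)=\mu(x,y)dt+\sigma dW(t)$ ($W$ standard Brownian motion) runs until it first hits $b(t)$ or $-b(t)$; $x$ is chosen if $b(t)$ is hit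 first and $y$ if $-b(t)$ is hit first, the response time being the first hitting time. The generated SCF-RT has $p(x,y)$ the probability of choosing $x$ and $F(x,y)$ the cdf of the response time conditional on choosing $x$. For cdfs $G,H$ on $\mathbb{R}^+$ and $q>0$, $G$ $q$-FSD $H$ means $G(t)\leq qH(t)$ for all $t\geq0$; $q$-SFSD means additionally strict inequality for some $t$. *)

theory Defs
  imports "HOL-Probability.Probability"
begin

definition std_BM :: "'w measure \<Rightarrow> (real \<Rightarrow> 'w \<Rightarrow> real) \<Rightarrow> bool" where
  "std_BM M W \<longleftrightarrow>
     prob_space M \<and>
     (\<forall>t\<ge>0. W t \<in> borel_measurable M) \<and>
     (\<forall>\<omega>\<in>space M. W 0 \<omega> = 0 \<and> continuous_on {0..} (\<lambda>t. W t \<omega>)) \<and>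
     (\<forall>s t. 0 \<le> s \<and> s < t \<longrightarrow>
        distributed M lborel (\<lambda>\<omega>. W t \<omega> - W s \<omega>)
          (\<lambda>z. ennreal (normal_density 0 (sqrt (t - s)) z))) \<and>
     (\<forall>ts :: real list. sorted_wrt (<) ts \<and> (\<forall>t\<in>set ts. 0 \<le> t) \<longrightarrow>
        prob_space.indep_vars M (\<lambda>_. borel)
          (\<lambda>i \<omega>. W (ts ! Suc i) \<omega> - W (ts ! i) \<omega>) {..<length ts - 1})"

definition constant_boundary :: "(real \<Rightarrow> real) \<Rightarrow> bool" where
  "constant_boundary b \<longleftrightarrow> (\<exists>B>0. \<forall>t\<ge>0. b t = B)"

definition collapsing_boundary :: "(real \<Rightarrow> real) \<Rightarrow> bool" where
  "collapsing_boundary b \<longleftrightarrow>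
     (\<forall>t\<ge>0. b t > 0) \<and> continuous_on {0..} b \<and>
     (\<forall>s t. 0 \<le> s \<and> s < t \<longrightarrow> b t < b s) \<and> (b \<longlongrightarrow> 0) at_top"

definition ddm_proc :: "real \<Rightarrow> real \<Rightarrow> (real \<Rightarrow> 'w \<Rightarrow> real) \<Rightarrow> real \<Rightarrow> 'w \<Rightarrow> real" where
  "ddm_proc mu sg W t \<omega> = mu * t + sg * W t \<omega>"

definition first_hit_upper_at :: "(real \<Rightarrow> real) \<Rightarrow> (real \<Rightarrow> real) \<Rightarrow> real \<Rightarrow> bool" where
  "first_hit_upper_at b Z s \<longleftrightarrow> 0 \<le> s \<and> Z s = b s \<and> (\<forall>r\<in>{0..<s}. \<bar>Z r\<bar> < b r)"

text \<open>Event: upper option chosen with response time at most T.\<close>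
definition upper_by :: "real \<Rightarrow> real \<Rightarrow> (real \<Rightarrow> 'w \<Rightarrow> real) \<Rightarrow> (real \<Rightarrow> real) \<Rightarrow> real \<Rightarrow> 'w set" where
  "upper_by mu sg W b T = {\<omega>. \<exists>s\<le>T. first_hit_upper_at b (\<lambda>t. ddm_proc mu sg W t \<omega>) s}"

definition upper_chosen :: "real \<Rightarrow> real \<Rightarrow> (real \<Rightarrow> 'w \<Rightarrow> real) \<Rightarrow> (real \<Rightarrow> real) \<Rightarrow> 'w set" where
  "upper_chosen mu sg W b = {\<omega>. \<exists>s. first_hit_upper_at b (\<lambda>t. ddm_proc mu sg W t \<omega>) s}"

definition q_FSD :: "real \<Rightarrow> (real \<Rightarrow> real) \<Rightarrow> (real \<Rightarrow> real) \<Rightarrow> bool" where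
  "q_FSD q G H \<longleftrightarrow> (\<forall>t\<ge>0. G t \<le> q * H t)"

definition q_SFSD :: "real \<Rightarrow> (real \<Rightarrow> real) \<Rightarrow> (real \<Rightarrow> real) \<Rightarrow> bool" where
  "q_SFSD q G H \<longleftrightarrow> q_FSD q G H \<and> (\<exists>t\<ge>0. G t < q * H t)"

definition DDM_generates ::
  "('a \<times> 'a) set \<Rightarrow> ('a \<Rightarrow> real) \<Rightarrow> 'w measure \<Rightarrow> (real \<Rightarrow> 'w \<Rightarrow> real) \<Rightarrow>
   ('a \<Rightarrow> 'a \<Rightarrow> real) \<Rightarrow> real \<Rightarrow> (real \<Rightarrow> real) \<Rightarrow>
   ('a \<Rightarrow> 'a \<Rightarrow> real) \<Rightarrow> ('a \<Rightarrow> 'a \<Rightarrow> real \<Rightarrow> real) \<Rightarrow> bool" where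
  "DDM_generates D u M W mu sg b p F \<longleftrightarrow>
     std_BM M W \<and> sg > 0 \<and>
     (constant_boundary b \<or> collapsing_boundary b) \<and>
     (\<forall>(x,y)\<in>D. mu x y = - mu y x \<and> (mu x y \<ge> 0 \<longleftrightarrow> u x - u y \<ge> 0)) \<and>
     (\<forall>(x,y)\<in>D. p x y = measure M (upper_chosen (mu x y) sg W b \<inter> space M)) \<and>
     (\<forall>(x,y)\<in>D. \<forall>t\<ge>0. F x y t =
        measure M (upper_by (mu x y) sg W b t \<inter> space M) /
        measure M (upper_chosen (mu x y) sg W b \<inter> space M))"

end

theory Submission
  imports Defs "HOL-Real_Asymp.Real_Asymp"
begin

lemma path_char:
  fixes Z b :: "real \<Rightarrow> real"
  assumes Zc: "continuous_on {0..} Z" and bc: "continuous_on {0..} b"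
    and bpos: "\<And>t. t \<ge> 0 \<Longrightarrow> b t > 0" and Z0: "Z 0 = 0"
  shows "(\<exists>s\<le>T. first_hit_upper_at b Z s) \<longleftrightarrow>
         (\<exists>s\<in>{0..T}. b s \<le> Z s \<and> (\<forall>r\<in>{0..s}. - b r < Z r))"
proof
  assume "\<exists>s\<le>T. first_hit_upper_at b Z s"
  then obtain s where s: "s \<le> T" "0 \<le> s" "Z s = b s" "\<forall>r\<in>{0..<s}. \<bar>Z r\<bar> < b r"
    unfolding first_hit_upper_at_def by auto
  have "\<forall>r\<in>{0..s}. - b r < Z r"
  proof
    fix r assume r: "r \<in> {0..s}"
    show "- b r < Z r"
    proof (cases "r = s")
      case True thus ?thesis using s bpos[of s] by auto
    next
      case False thus ?thesis using s(4) r by force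
    qed
  qed
  thus "\<exists>s\<in>{0..T}. b s \<le> Z s \<and> (\<forall>r\<in>{0..s}. - b r < Z r)" using s
    by (intro bexI[of _ s]) auto
next
  assume "\<exists>s\<in>{0..T}. b s \<le> Z s \<and> (\<forall>r\<in>{0..s}. - b r < Z r)"
  then obtain s where s: "0 \<le> s" "s \<le> T" "b s \<le> Z s" "\<forall>r\<in>{0..s}. - b r < Z r" by auto
  define S where "S = {r \<in> {0..s}. b r \<le> Z r}"
  have Zc': "continuous_on {0..s} Z" using Zc by (rule continuous_on_subset) auto
  have bc': "continuous_on {0..s} b" using bc by (rule continuous_on_subset) auto
  have clS: "closed S" unfolding S_def
    by (rule continuous_on_closed_Collect_le[OF bc' Zc']) simp
  have sS: "s \<in> S" using s unfolding S_def by auto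
  have bdd: "bdd_below S" unfolding S_def by (auto intro: bdd_belowI[of _ 0])
  define \<tau> where "\<tau> = Inf S"
  have tS: "\<tau> \<in> S" unfolding \<tau>_def using closed_contains_Inf[OF _ bdd clS] sS by auto
  have low: "\<And>r. r \<in> S \<Longrightarrow> \<tau> \<le> r" unfolding \<tau>_def using bdd by (auto intro: cInf_lower)
  have t0: "0 \<le> \<tau>" "\<tau> \<le> s" "b \<tau> \<le> Z \<tau>" using tS unfolding S_def by auto
  have fc: "continuous_on {0..\<tau>} (\<lambda>r. Z r - b r)"
    by (intro continuous_intros continuous_on_subset[OF Zc] continuous_on_subset[OF bc]) auto
  have "(\<lambda>r. Z r - b r) 0 \<le> 0" using Z0 bpos[of 0] by simp
  moreover have "0 \<le> (\<lambda>r. Z r - b r) \<tau>" using t0 by simp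
  ultimately obtain x where x: "0 \<le> x" "x \<le> \<tau>" "Z x - b x = 0"
    using IVT'[of "\<lambda>r. Z r - b r" 0 0 \<tau>, OF _ _ t0(1) fc] by auto
  have "x \<in> S" using x t0 unfolding S_def by auto
  hence "x = \<tau>" using low x by force
  hence eq: "Z \<tau> = b \<tau>" using x by simp
  have "\<forall>r\<in>{0..<\<tau>}. \<bar>Z r\<bar> < b r"
  proof
    fix r assume r: "r \<in> {0..<\<tau>}"
    have "r \<notin> S" using low r by force
    hence "Z r < b r" using r t0 unfolding S_def by auto
    moreover have "- b r < Z r" using s(4) r t0 by auto
    ultimately show "\<bar>Z r\<bar> < b r" by auto
  qed
  hence "first_hit_upper_at b Z \<tau>" unfolding first_hit_upper_at_def using eq t0 by auto
  thus "\<exists>s\<le>T. first_hit_upper_at b Z s" using t0 s by (intro exI[of _ \<tau>]) auto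
qed

definition Qs :: "real \<Rightarrow> real set" where
  "Qs x = {r. 0 \<le> r \<and> r \<le> x \<and> (r \<in> \<rat> \<or> r = x)}"

lemma countable_Qs: "countable (Qs x)"
proof -
  have "Qs x \<subseteq> insert x \<rat>" unfolding Qs_def by auto
  thus ?thesis using countable_rat by (metis countable_insert countable_subset)
qed

lemma dense_ext:
  fixes ch :: "real \<Rightarrow> real"
  assumes c: "continuous_on {0..x} ch" and h: "\<forall>r\<in>Qs x. c \<le> ch r"
  shows "\<forall>r\<in>{0..x}. c \<le> ch r"
proof
  fix r assume r: "r \<in> {0..x}"
  show "c \<le> ch r"
  proof (cases "r = x")
    case True thus ?thesis using h r unfolding Qs_def by auto
  next
    case False
    hence rx: "r < x" using r by auto
    show ?thesis
    proof (rule ccontr)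
      assume "\<not> c \<le> ch r"
      hence e: "c - ch r > 0" by simp
      have "\<forall>e>0. \<exists>d>0. \<forall>y\<in>{0..x}. dist y r < d \<longrightarrow> dist (ch y) (ch r) < e"
        by (rule bspec[OF c[unfolded continuous_on_iff] r])
      then obtain d where d: "d > 0" "\<forall>y\<in>{0..x}. dist y r < d \<longrightarrow> dist (ch y) (ch r) < c - ch r"
        using e by blast
      obtain y where y: "y \<in> \<rat>" "r < y" "y < min (r + d) x"
        using Rats_dense_in_real[of r "min (r+d) x"] rx d by auto
      have "y \<in> Qs x" using y r unfolding Qs_def by auto
      hence "c \<le> ch y" using h by auto
      moreover have "dist (ch y) (ch r) < c - ch r" using d y r by (auto simp: dist_real_def)
      ultimately show False by (auto simp: dist_real_def)
    qed
  qed
qed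

lemma count_char:
  fixes ps ch :: "real \<Rightarrow> real"
  assumes ps_c: "continuous_on {0..} ps" and ch_c: "continuous_on {0..} ch"
    and lt: "\<And>r. r \<ge> 0 \<Longrightarrow> ps r < ch r"
  shows "(\<exists>s\<in>{0..T}. 0 \<le> ps s \<and> (\<forall>r\<in>{0..s}. 0 < ch r)) \<longleftrightarrow>
    (\<exists>n::nat. \<forall>k::nat. \<exists>q\<in>Qs T. - inverse (real (Suc k)) < ps q \<and>
        (\<forall>r\<in>Qs q. inverse (real (Suc n)) \<le> ch r))"
proof
  assume "\<exists>s\<in>{0..T}. 0 \<le> ps s \<and> (\<forall>r\<in>{0..s}. 0 < ch r)"
  then obtain s where s: "0 \<le> s" "s \<le> T" "0 \<le> ps s" "\<forall>r\<in>{0..s}. 0 < ch r" by auto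
  have "\<exists>x\<in>{0..s}. \<forall>y\<in>{0..s}. ch x \<le> ch y"
    by (rule continuous_attains_inf) (use s in \<open>auto intro: continuous_on_subset[OF ch_c]\<close>)
  then obtain x0 where x0: "x0 \<in> {0..s}" "\<forall>y\<in>{0..s}. ch x0 \<le> ch y" by blast
  have "ch x0 > 0" using s x0 by auto
  then obtain n where n: "inverse (real (Suc n)) < ch x0" using reals_Archimedean by blast
  have "\<forall>k::nat. \<exists>q\<in>Qs T. - inverse (real (Suc k)) < ps q \<and>
        (\<forall>r\<in>Qs q. inverse (real (Suc n)) \<le> ch r)"
  proof
    fix k :: nat
    have ek: "inverse (real (Suc k)) > 0" by simp
    show "\<exists>q\<in>Qs T. - inverse (real (Suc k)) < ps q \<and> (\<forall>r\<in>Qs q. inverse (real (Suc n)) \<le> ch r)"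
    proof (cases "s = 0")
      case True
      have "0 \<in> Qs T" using s unfolding Qs_def by auto
      moreover have "Qs 0 = {0}" unfolding Qs_def by auto
      moreover have "ch x0 \<le> ch 0" using x0(2) s by auto
      hence "inverse (real (Suc n)) \<le> ch 0" using n by linarith
      moreover have "- inverse (real (Suc k)) < ps 0" using True s(3) ek by (metis neg_less_0_iff_less order_less_le_trans)
      ultimately show ?thesis by (intro bexI[of _ 0]) simp_all
    next
      case False
      hence spos: "s > 0" using s by auto
      have "\<forall>e>0. \<exists>d>0. \<forall>y\<in>{0..}. dist y s < d \<longrightarrow> dist (ps y) (ps s) < e"
        by (rule bspec[OF ps_c[unfolded continuous_on_iff]]) (use s in auto)
      then obtain d where d: "d > 0" "\<forall>y\<in>{0..}. dist y s < d \<longrightarrow> dist (ps y) (ps s) < inverse (real (Suc k))"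
        using ek by blast
      obtain q where q: "q \<in> \<rat>" "max 0 (s - d) < q" "q < s"
        using Rats_dense_in_real[of "max 0 (s - d)" s] spos d by auto
      have "q \<in> Qs T" using q s unfolding Qs_def by auto
      moreover have "- inverse (real (Suc k)) < ps q"
        using d(2)[rule_format, of q] q s by (auto simp: dist_real_def)
      moreover have "\<forall>r\<in>Qs q. inverse (real (Suc n)) \<le> ch r"
      proof
        fix r assume "r \<in> Qs q"
        hence "r \<in> {0..s}" using q unfolding Qs_def by auto
        hence "ch x0 \<le> ch r" using x0(2) by blast
        thus "inverse (real (Suc n)) \<le> ch r" using n by linarith
      qed
      ultimately show ?thesis by blast
    qed
  qed
  thus "\<exists>n::nat. \<forall>k::nat. \<exists>q\<in>Qs T. - inverse (real (Suc k)) < ps q \<and>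
        (\<forall>r\<in>Qs q. inverse (real (Suc n)) \<le> ch r)" by blast
next
  assume "\<exists>n::nat. \<forall>k::nat. \<exists>q\<in>Qs T. - inverse (real (Suc k)) < ps q \<and>
        (\<forall>r\<in>Qs q. inverse (real (Suc n)) \<le> ch r)"
  then obtain n where "\<forall>k::nat. \<exists>q\<in>Qs T. - inverse (real (Suc k)) < ps q \<and>
        (\<forall>r\<in>Qs q. inverse (real (Suc n)) \<le> ch r)" by blast
  hence "\<forall>k. \<exists>q. q \<in> Qs T \<and> - inverse (real (Suc k)) < ps q \<and>
        (\<forall>r\<in>Qs q. inverse (real (Suc n)) \<le> ch r)" by blast
  from choice[OF this] obtain q where q0: "\<forall>k. q k \<in> Qs T \<and> - inverse (real (Suc k)) < ps (q k) \<and>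
        (\<forall>r\<in>Qs (q k). inverse (real (Suc n)) \<le> ch r)" by blast
  have q: "\<And>k. q k \<in> Qs T" "\<And>k. - inverse (real (Suc k)) < ps (q k)"
     "\<And>k. \<forall>r\<in>Qs (q k). inverse (real (Suc n)) \<le> ch r" using q0 by auto
  have qT: "q k \<in> {0..T}" for k using q(1)[of k] unfolding Qs_def by auto
  have "seq_compact {0..T}" by (rule compact_imp_seq_compact) simp
  then obtain l r where l: "l \<in> {0..T}" "strict_mono r" "(q \<circ> r) \<longlonglongrightarrow> l"
    using \<open>seq_compact {0..T}\<close>[unfolded seq_compact_def, rule_format, of q] qT by auto
  have lim1: "(\<lambda>k. ps ((q \<circ> r) k)) \<longlonglongrightarrow> ps l"
    by (rule continuous_on_tendsto_compose[OF ps_c l(3)]) (use l qT in auto)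
  have lim2: "(\<lambda>k. - inverse (real (Suc k))) \<longlonglongrightarrow> - 0"
    by (intro tendsto_minus LIMSEQ_inverse_real_of_nat)
  have "- 0 \<le> ps l"
  proof (rule LIMSEQ_le[OF lim2 lim1], intro exI allI impI)
    fix k :: nat
    have "k \<le> r k" using l(2) by (rule seq_suble)
    hence "inverse (real (Suc (r k))) \<le> inverse (real (Suc k))"
      by (intro le_imp_inverse_le) auto
    thus "- inverse (real (Suc k)) \<le> ps ((q \<circ> r) k)" using q(2)[of "r k"] unfolding o_apply by linarith
  qed
  hence ps_l: "0 \<le> ps l" by simp
  have "\<forall>x\<in>{0..l}. 0 < ch x"
  proof
    fix x assume x: "x \<in> {0..l}"
    show "0 < ch x"
    proof (cases "x = l")
      case True thus ?thesis using lt[of l] ps_l l by auto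
    next
      case False
      hence xl: "x < l" using x by auto
      have "eventually (\<lambda>k. dist ((q \<circ> r) k) l < l - x) sequentially"
        using l(3) xl by (auto simp: tendsto_iff)
      then obtain k where k: "dist ((q \<circ> r) k) l < l - x" unfolding eventually_sequentially by auto
      hence xq: "x \<le> q (r k)" by (auto simp: dist_real_def)
      have "\<forall>y\<in>{0..q (r k)}. inverse (real (Suc n)) \<le> ch y"
        by (rule dense_ext[OF continuous_on_subset[OF ch_c] q(3)]) auto
      hence "inverse (real (Suc n)) \<le> ch x" using x xq by auto
      moreover have "0 < inverse (real (Suc n))" by simp
      ultimately show ?thesis by linarith
    qed
  qed
  thus "\<exists>s\<in>{0..T}. 0 \<le> ps s \<and> (\<forall>r\<in>{0..s}. 0 < ch r)" using l ps_l by blast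
qed

lemma ddm_cont:
  assumes "continuous_on {0..} (\<lambda>t. W t \<omega>)"
  shows "continuous_on {0..} (\<lambda>t. ddm_proc mu sg W t \<omega>)"
  unfolding ddm_proc_def by (intro continuous_intros assms)

lemma upper_by_eq:
  assumes Wc: "\<forall>\<omega>\<in>space M. W 0 \<omega> = 0 \<and> continuous_on {0..} (\<lambda>t. W t \<omega>)"
    and bc: "continuous_on {0..} b" and bpos: "\<And>t. t \<ge> 0 \<Longrightarrow> b t > 0"
  shows "upper_by mu sg W b T \<inter> space M = {\<omega>\<in>space M. \<exists>n::nat. \<forall>k::nat. \<exists>q\<in>Qs T.
      - inverse (real (Suc k)) < mu * q + sg * W q \<omega> - b q \<and>
      (\<forall>r\<in>Qs q. inverse (real (Suc n)) \<le> mu * r + sg * W r \<omega> + b r)}"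
proof -
  { fix \<omega> assume \<omega>: "\<omega> \<in> space M"
    let ?Z = "\<lambda>t. ddm_proc mu sg W t \<omega>"
    have Zc: "continuous_on {0..} ?Z" using Wc \<omega> by (intro ddm_cont) auto
    have Z0: "?Z 0 = 0" using Wc \<omega> by (simp add: ddm_proc_def)
    have "\<omega> \<in> upper_by mu sg W b T \<longleftrightarrow> (\<exists>s\<le>T. first_hit_upper_at b ?Z s)"
      unfolding upper_by_def by simp
    also have "\<dots> \<longleftrightarrow> (\<exists>s\<in>{0..T}. b s \<le> ?Z s \<and> (\<forall>r\<in>{0..s}. - b r < ?Z r))"
      by (rule path_char[OF Zc bc bpos Z0])
    also have "\<dots> \<longleftrightarrow> (\<exists>s\<in>{0..T}. 0 \<le> (\<lambda>t. ?Z t - b t) s \<and> (\<forall>r\<in>{0..s}. 0 < (\<lambda>t. ?Z t + b t) r))"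
      by (intro bex_cong refl) auto
    also have "\<dots> \<longleftrightarrow> (\<exists>n::nat. \<forall>k::nat. \<exists>q\<in>Qs T. - inverse (real (Suc k)) < (\<lambda>t. ?Z t - b t) q \<and>
        (\<forall>r\<in>Qs q. inverse (real (Suc n)) \<le> (\<lambda>t. ?Z t + b t) r))"
      by (rule count_char) (use bpos in \<open>auto intro!: continuous_intros Zc bc\<close>)
    finally have "\<omega> \<in> upper_by mu sg W b T \<longleftrightarrow> (\<exists>n::nat. \<forall>k::nat. \<exists>q\<in>Qs T.
      - inverse (real (Suc k)) < mu * q + sg * W q \<omega> - b q \<and>
      (\<forall>r\<in>Qs q. inverse (real (Suc n)) \<le> mu * r + sg * W r \<omega> + b r))"
      by (simp add: ddm_proc_def) }
  thus ?thesis by auto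
qed

lemma upper_by_meas:
  assumes Wm: "\<forall>t\<ge>0. W t \<in> borel_measurable M"
    and Wc: "\<forall>\<omega>\<in>space M. W 0 \<omega> = 0 \<and> continuous_on {0..} (\<lambda>t. W t \<omega>)"
    and bc: "continuous_on {0..} b" and bpos: "\<And>t. t \<ge> 0 \<Longrightarrow> b t > 0"
  shows "upper_by mu sg W b T \<inter> space M \<in> sets M"
proof -
  have base1: "{\<omega>\<in>space M. c < mu * q + sg * W q \<omega> - b q} \<in> sets M" if "q \<ge> 0" for c q
  proof -
    have [measurable]: "W q \<in> borel_measurable M" using Wm that by auto
    show ?thesis by measurable
  qed
  have base2: "{\<omega>\<in>space M. c \<le> mu * q + sg * W q \<omega> + b q} \<in> sets M" if "q \<ge> 0" for c q
  proof -
    have [measurable]: "W q \<in> borel_measurable M" using Wm that by auto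
    show ?thesis by measurable
  qed
  have Qs0: "\<And>x q. q \<in> Qs x \<Longrightarrow> q \<ge> 0" unfolding Qs_def by auto
  show ?thesis
    apply (subst upper_by_eq[OF Wc bc bpos])
     apply assumption
    apply (rule sets.sets_Collect_countable_Ex)
    apply (rule sets.sets_Collect_countable_All)
    apply (rule sets.sets_Collect_countable_Ex'[OF _ countable_Qs])
    apply (rule sets.sets_Collect_conj)
     apply (rule sets.sets_Collect_countable_All'[OF _ countable_Qs])
     apply (rule base2)
     apply (rule Qs0, assumption)
    apply (rule base1, erule Qs0)
    done
qed

lemma upper_chosen_eq:
  "upper_chosen mu sg W b \<inter> space M = (\<Union>n::nat. upper_by mu sg W b (real n) \<inter> space M)"
proof -
  { fix \<omega>
    have "(\<exists>s. first_hit_upper_at b (\<lambda>t. ddm_proc mu sg W t \<omega>) s) \<longleftrightarrow>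
          (\<exists>n::nat. \<exists>s\<le>real n. first_hit_upper_at b (\<lambda>t. ddm_proc mu sg W t \<omega>) s)"
      by (meson real_arch_simple) }
  thus ?thesis unfolding upper_chosen_def upper_by_def by auto
qed

lemma upper_chosen_meas:
  assumes Wm: "\<forall>t\<ge>0. W t \<in> borel_measurable M"
    and Wc: "\<forall>\<omega>\<in>space M. W 0 \<omega> = 0 \<and> continuous_on {0..} (\<lambda>t. W t \<omega>)"
    and bc: "continuous_on {0..} b" and bpos: "\<And>t. t \<ge> 0 \<Longrightarrow> b t > 0"
  shows "upper_chosen mu sg W b \<inter> space M \<in> sets M"
  unfolding upper_chosen_eq
  by (rule sets.countable_UN) (use upper_by_meas[OF Wm Wc bc bpos] in blast)

lemma chain_fin:
  fixes w :: "real \<Rightarrow> real" and rs :: "nat \<Rightarrow> real"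
  assumes "\<forall>m\<le>n. \<forall>i<(2::nat)^m. \<bar>w (s + real (Suc i) * h / 2^m) - w (s + real i * h / 2^m)\<bar> \<le> rs m"
  shows "\<forall>j\<le>(2::nat)^n. \<bar>w (s + real j * h / 2^n) - w s\<bar> \<le> (\<Sum>m\<le>n. rs m)"
  using assms
proof (induction n)
  case 0
  have h0: "\<bar>w (s + h) - w s\<bar> \<le> rs 0" using 0[rule_format, of 0 0] by simp
  show ?case
  proof (intro allI impI)
    fix j :: nat assume "j \<le> 2^0"
    hence "j = 0 \<or> j = 1" by auto
    thus "\<bar>w (s + real j * h / 2^0) - w s\<bar> \<le> (\<Sum>m\<le>0. rs m)" using h0 by auto
  qed
next
  case (Suc n)
  have IH: "\<forall>j\<le>(2::nat)^n. \<bar>w (s + real j * h / 2^n) - w s\<bar> \<le> (\<Sum>m\<le>n. rs m)"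
    using Suc.IH Suc.prems by auto
  have P: "\<And>m i. m \<le> Suc n \<Longrightarrow> i < 2^m \<Longrightarrow> \<bar>w (s + real (Suc i) * h / 2^m) - w (s + real i * h / 2^m)\<bar> \<le> rs m"
    using Suc.prems by blast
  have "\<bar>w (s + real (Suc 0) * h / 2^Suc n) - w (s + real 0 * h / 2^Suc n)\<bar> \<le> rs (Suc n)"
    by (rule P) auto
  hence rsn: "0 \<le> rs (Suc n)" by linarith
  have sum_eq: "(\<Sum>m\<le>Suc n. rs m) = (\<Sum>m\<le>n. rs m) + rs (Suc n)" by simp
  show ?case
  proof (intro allI impI)
    fix j :: nat assume j: "j \<le> 2^Suc n"
    define j' where "j' = j div 2"
    have j': "j = 2 * j' \<or> j = Suc (2 * j')" unfolding j'_def by presburger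
    have pos_eq: "s + real (2 * j') * h / 2 ^ Suc n = s + real j' * h / 2^n" by (simp add: field_simps)
    show "\<bar>w (s + real j * h / 2^Suc n) - w s\<bar> \<le> (\<Sum>m\<le>Suc n. rs m)"
    proof (cases "j = 2 * j'")
      case True
      hence "j' \<le> 2^n" using j by simp
      hence "\<bar>w (s + real j' * h / 2^n) - w s\<bar> \<le> (\<Sum>m\<le>n. rs m)" using IH by auto
      thus ?thesis using True pos_eq sum_eq rsn by simp
    next
      case False
      hence jj: "j = Suc (2 * j')" using j' by simp
      hence "j' < 2^n" using j by simp
      hence a1: "\<bar>w (s + real j' * h / 2^n) - w s\<bar> \<le> (\<Sum>m\<le>n. rs m)" using IH by auto
      have "2 * j' < 2 ^ Suc n" using \<open>j' < 2^n\<close> by simp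
      have a2: "\<bar>w (s + real (Suc (2*j')) * h / 2^Suc n) - w (s + real (2*j') * h / 2^Suc n)\<bar> \<le> rs (Suc n)"
        by (rule P[OF le_refl \<open>2 * j' < 2 ^ Suc n\<close>])
      have a2': "\<bar>w (s + real (Suc (2*j')) * h / 2^Suc n) - w (s + real j' * h / 2^n)\<bar> \<le> rs (Suc n)"
        using a2 unfolding pos_eq .
      show ?thesis unfolding jj sum_eq using a1 a2' by linarith
    qed
  qed
qed

lemma chain_all:
  fixes w :: "real \<Rightarrow> real" and rs :: "nat \<Rightarrow> real"
  assumes b: "\<forall>m. \<forall>i<(2::nat)^m. \<bar>w (s + real (Suc i) * h / 2^m) - w (s + real i * h / 2^m)\<bar> \<le> rs m"
    and sb: "\<forall>n. (\<Sum>m\<le>n. rs m) \<le> \<rho>"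
    and wc: "continuous_on {s..s+h} w" and h: "h > 0"
  shows "\<forall>r\<in>{s..s+h}. \<bar>w r - w s\<bar> \<le> \<rho>"
proof
  fix r assume r: "r \<in> {s..s+h}"
  define y where "y n = (r - s) / h * 2^n" for n :: nat
  define j where "j n = nat \<lfloor>y n\<rfloor>" for n
  define x where "x n = s + real (j n) * h / 2^n" for n
  have y0: "0 \<le> y n" for n using r h unfolding y_def by auto
  have yle: "y n \<le> 2^n" for n
  proof -
    have "(r - s) / h \<le> 1" using r h by auto
    hence "(r - s) / h * 2^n \<le> 1 * 2^n" by (intro mult_right_mono) auto
    thus ?thesis unfolding y_def by simp
  qed
  have jy: "real (j n) \<le> y n" "y n < real (j n) + 1" for n
    unfolding j_def using y0[of n] by linarith+
  have jle: "j n \<le> 2^n" for n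
  proof -
    have "real (j n) \<le> 2^n" using jy(1)[of n] yle[of n] by linarith
    thus ?thesis by (metis of_nat_le_iff of_nat_numeral of_nat_power)
  qed
  have xr: "x n \<le> r" "r - x n < h / 2^n" for n
  proof -
    have eq: "r = s + y n * h / 2^n" unfolding y_def using h by (simp add: field_simps)
    have "real (j n) * h / 2^n \<le> y n * h / 2^n" using jy(1)[of n] h by (simp add: divide_right_mono)
    thus "x n \<le> r" unfolding x_def using eq by linarith
    have "(y n - real (j n)) * h / 2^n < 1 * h / 2^n" using jy(2)[of n] h
      by (intro divide_strict_right_mono mult_strict_right_mono) auto
    thus "r - x n < h / 2^n" unfolding x_def using eq by (simp add: field_simps)
  qed
  have xs: "s \<le> x n" for n unfolding x_def using h by simp
  have xsh: "x n \<in> {s..s+h}" for n using xr(1)[of n] xs[of n] r by auto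
  have xlim: "x \<longlonglongrightarrow> r"
  proof -
    have "(\<lambda>n. h / 2^n) \<longlonglongrightarrow> 0"
      by (rule LIMSEQ_divide_realpow_zero) auto
    have nb: "norm (x n - r) \<le> h / 2^n" for n
    proof -
      have "\<bar>x n - r\<bar> = r - x n" using xr(1)[of n] by simp
      thus ?thesis using xr(2)[of n] by simp
    qed
    have ev: "eventually (\<lambda>n. norm (x n - r) \<le> h / 2^n) sequentially"
      using nb by (intro always_eventually) blast
    have "(\<lambda>n. x n - r) \<longlonglongrightarrow> 0"
      by (rule Lim_null_comparison[OF ev \<open>(\<lambda>n. h / 2^n) \<longlonglongrightarrow> 0\<close>])
    thus ?thesis by (simp add: LIM_zero_cancel)
  qed
  have "(\<lambda>n. \<bar>w (x n) - w s\<bar>) \<longlonglongrightarrow> \<bar>w r - w s\<bar>"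
    by (intro tendsto_intros continuous_on_tendsto_compose[OF wc xlim])
       (use r xsh in \<open>auto intro!: always_eventually\<close>)
  moreover have "\<bar>w (x n) - w s\<bar> \<le> \<rho>" for n
  proof -
    have "\<forall>m\<le>n. \<forall>i<(2::nat)^m. \<bar>w (s + real (Suc i) * h / 2^m) - w (s + real i * h / 2^m)\<bar> \<le> rs m"
      using b by auto
    from chain_fin[OF this] jle[of n] have "\<bar>w (x n) - w s\<bar> \<le> (\<Sum>m\<le>n. rs m)" unfolding x_def by auto
    thus ?thesis using sb by (meson order_trans)
  qed
  ultimately show "\<bar>w r - w s\<bar> \<le> \<rho>" by (intro LIMSEQ_le_const2) auto
qed

lemma BM_prob: "std_BM M W \<Longrightarrow> prob_space M" unfolding std_BM_def by auto
lemma BM_meas: "std_BM M W \<Longrightarrow> t \<ge> 0 \<Longrightarrow> W t \<in> borel_measurable M" unfolding std_BM_def by auto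
lemma BM_path: "std_BM M W \<Longrightarrow> \<omega> \<in> space M \<Longrightarrow> W 0 \<omega> = 0 \<and> continuous_on {0..} (\<lambda>t. W t \<omega>)"
  unfolding std_BM_def by auto
lemma BM_distr: "std_BM M W \<Longrightarrow> 0 \<le> s \<Longrightarrow> s < t \<Longrightarrow>
   distributed M lborel (\<lambda>\<omega>. W t \<omega> - W s \<omega>) (\<lambda>z. ennreal (normal_density 0 (sqrt (t - s)) z))"
  unfolding std_BM_def by auto
lemma BM_indep: "std_BM M W \<Longrightarrow> sorted_wrt (<) ts \<Longrightarrow> (\<forall>t\<in>set ts. 0 \<le> t) \<Longrightarrow>
   prob_space.indep_vars M (\<lambda>_. borel) (\<lambda>i \<omega>. W (ts ! Suc i) \<omega> - W (ts ! i) \<omega>) {..<length ts - 1}"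
  unfolding std_BM_def by auto

lemma nd_mono:
  assumes "\<sigma> > 0" "\<bar>x\<bar> \<le> A"
  shows "normal_density 0 \<sigma> A \<le> normal_density 0 \<sigma> x"
proof -
  have "x\<^sup>2 \<le> A\<^sup>2" using assms(2) by (metis abs_le_square_iff abs_of_nonneg abs_ge_zero order_trans)
  hence "- (A\<^sup>2) / (2 * \<sigma>\<^sup>2) \<le> - (x\<^sup>2) / (2 * \<sigma>\<^sup>2)" using assms(1)
    by (intro divide_right_mono) auto
  hence "exp (- (A\<^sup>2) / (2 * \<sigma>\<^sup>2)) \<le> exp (- (x\<^sup>2) / (2 * \<sigma>\<^sup>2))" by simp
  hence "1 / sqrt (2 * pi * \<sigma>\<^sup>2) * exp (- (A - 0)\<^sup>2 / (2 * \<sigma>\<^sup>2))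
     \<le> 1 / sqrt (2 * pi * \<sigma>\<^sup>2) * exp (- (x - 0)\<^sup>2 / (2 * \<sigma>\<^sup>2))"
    by (intro mult_left_mono) auto
  thus ?thesis unfolding normal_density_def .
qed

lemma inc_interval_lb:
  assumes BM: "std_BM M W" and st: "0 \<le> s" "s < t" and eta: "\<eta> > 0"
  shows "2 * \<eta> * normal_density 0 (sqrt (t - s)) (\<bar>c\<bar> + \<eta>)
      \<le> measure M {\<omega>\<in>space M. \<bar>W t \<omega> - W s \<omega> - c\<bar> \<le> \<eta>}"
proof -
  interpret prob_space M by (rule BM_prob[OF BM])
  let ?X = "\<lambda>\<omega>. W t \<omega> - W s \<omega>"
  let ?f = "\<lambda>z. normal_density 0 (sqrt (t - s)) z"
  let ?v = "?f (\<bar>c\<bar> + \<eta>)"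
  have D: "distributed M lborel ?X (\<lambda>z. ennreal (?f z))" by (rule BM_distr[OF BM st])
  have seteq: "{\<omega>\<in>space M. \<bar>W t \<omega> - W s \<omega> - c\<bar> \<le> \<eta>} = ?X -` {c - \<eta>..c + \<eta>} \<inter> space M"
    by auto
  have "emeasure M (?X -` {c - \<eta>..c + \<eta>} \<inter> space M) = (\<integral>\<^sup>+x\<in>{c - \<eta>..c + \<eta>}. ennreal (?f x) \<partial>lborel)"
    by (rule distributed_emeasure[OF D]) simp
  also have "\<dots> \<ge> (\<integral>\<^sup>+x\<in>{c - \<eta>..c + \<eta>}. ennreal ?v \<partial>lborel)"
  proof (rule nn_integral_mono)
    fix x
    show "ennreal ?v * indicator {c - \<eta>..c + \<eta>} x \<le> ennreal (?f x) * indicator {c - \<eta>..c + \<eta>} x"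
    proof (cases "x \<in> {c - \<eta>..c + \<eta>}")
      case True
      hence "\<bar>x\<bar> \<le> \<bar>c\<bar> + \<eta>" by auto
      hence "?v \<le> ?f x" using st by (intro nd_mono) auto
      thus ?thesis using True by (simp add: ennreal_leI)
    qed simp
  qed
  moreover have "(\<integral>\<^sup>+x\<in>{c - \<eta>..c + \<eta>}. ennreal ?v \<partial>lborel) = ennreal (2 * \<eta> * ?v)"
  proof -
    have "(\<integral>\<^sup>+x\<in>{c - \<eta>..c + \<eta>}. ennreal ?v \<partial>lborel) = ennreal ?v * emeasure lborel {c - \<eta>..c + \<eta>}"
      by (rule nn_integral_cmult_indicator) simp
    also have "\<dots> = ennreal ?v * ennreal (2 * \<eta>)" using eta by (simp add: emeasure_lborel_Icc)
    also have "\<dots> = ennreal (2 * \<eta> * ?v)" using eta by (simp add: ennreal_mult'[symmetric] mult.commute)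
    finally show ?thesis .
  qed
  ultimately have "ennreal (2 * \<eta> * ?v) \<le> emeasure M (?X -` {c - \<eta>..c + \<eta>} \<inter> space M)" by simp
  thus ?thesis unfolding seteq emeasure_eq_measure by (simp add: ennreal_le_iff measure_nonneg)
qed

lemma inc_tail_ub:
  assumes BM: "std_BM M W" and st: "0 \<le> s" "s < t" and rho: "\<rho> > 0"
  shows "measure M {\<omega>\<in>space M. \<rho> < \<bar>W t \<omega> - W s \<omega>\<bar>} \<le> 3 * (t - s)\<^sup>2 / \<rho> ^ 4"
proof -
  interpret prob_space M by (rule BM_prob[OF BM])
  let ?X = "\<lambda>\<omega>. W t \<omega> - W s \<omega>"
  define \<sigma> where "\<sigma> = sqrt (t - s)"
  have \<sigma>: "\<sigma> > 0" "\<sigma>\<^sup>2 = t - s" unfolding \<sigma>_def using st by auto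
  let ?f = "\<lambda>z. normal_density 0 \<sigma> z"
  have D: "distributed M lborel ?X (\<lambda>z. ennreal (?f z))" unfolding \<sigma>_def by (rule BM_distr[OF BM st])
  let ?A = "{x::real. \<rho> < \<bar>x\<bar>}"
  have Am: "?A \<in> sets lborel" by measurable
  have seteq: "{\<omega>\<in>space M. \<rho> < \<bar>W t \<omega> - W s \<omega>\<bar>} = ?X -` ?A \<inter> space M" by auto
  have mom: "has_bochner_integral lborel (\<lambda>x. ?f x * (x - 0) ^ (2 * 2)) (fact (2 * 2) / ((2 / \<sigma>\<^sup>2) ^ 2 * fact 2))"
    by (rule normal_moment_even) (rule \<sigma>(1))
  have val: "fact (2 * 2) / ((2 / \<sigma>\<^sup>2) ^ 2 * fact 2) = 3 * (t - s)\<^sup>2"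
    unfolding \<sigma>(2) using st by (simp add: fact_numeral power2_eq_square field_simps)
  have mom2: "has_bochner_integral lborel (\<lambda>x. ?f x * x ^ 4 / \<rho> ^ 4) (3 * (t - s)\<^sup>2 / \<rho> ^ 4)"
  proof -
    have H: "has_bochner_integral lborel (\<lambda>x. ?f x * (x - 0) ^ (2 * 2) / \<rho> ^ 4)
       (fact (2 * 2) / ((2 / \<sigma>\<^sup>2) ^ 2 * fact 2) / \<rho> ^ 4)"
      by (rule has_bochner_integral_divide_zero[OF mom])
    show ?thesis using H unfolding val by simp
  qed
  have "emeasure M (?X -` ?A \<inter> space M) = (\<integral>\<^sup>+x\<in>?A. ennreal (?f x) \<partial>lborel)"
    by (rule distributed_emeasure[OF D Am])
  also have "\<dots> \<le> (\<integral>\<^sup>+x. ennreal (?f x * x ^ 4 / \<rho> ^ 4) \<partial>lborel)"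
  proof (rule nn_integral_mono)
    fix x
    show "ennreal (?f x) * indicator ?A x \<le> ennreal (?f x * x ^ 4 / \<rho> ^ 4)"
    proof (cases "x \<in> ?A")
      case True
      hence "\<rho> ^ 4 \<le> \<bar>x\<bar> ^ 4" using rho by (intro power_mono) auto
      hence "1 \<le> x ^ 4 / \<rho> ^ 4" using rho by (simp add: power_abs)
      hence "?f x * 1 \<le> ?f x * (x ^ 4 / \<rho> ^ 4)" by (intro mult_left_mono) auto
      thus ?thesis using True by (simp add: ennreal_leI)
    qed simp
  qed
  also have "\<dots> = ennreal (3 * (t - s)\<^sup>2 / \<rho> ^ 4)"
  proof -
    have "integrable lborel (\<lambda>x. ?f x * x ^ 4 / \<rho> ^ 4)" using mom2 by (rule integrable.intros)
    moreover have "AE x in lborel. 0 \<le> ?f x * x ^ 4 / \<rho> ^ 4"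
      by (intro AE_I2 divide_nonneg_nonneg mult_nonneg_nonneg) auto
    ultimately show ?thesis using has_bochner_integral_integral_eq[OF mom2]
      by (simp add: nn_integral_eq_integral)
  qed
  finally have "emeasure M (?X -` ?A \<inter> space M) \<le> ennreal (3 * (t - s)\<^sup>2 / \<rho> ^ 4)" .
  thus ?thesis unfolding seteq emeasure_eq_measure using rho by (simp add: ennreal_le_iff)
qed

lemma block_indep:
  fixes P :: "nat \<Rightarrow> (nat \<Rightarrow> real) \<Rightarrow> bool" and N B :: nat and d :: real
  assumes BM: "std_BM M W" and N: "N \<ge> 1" and d: "d > 0"
    and loc: "\<And>k f g. k < N \<Longrightarrow> (\<And>i. i \<in> {k*B..<Suc k*B} \<Longrightarrow> f i = g i) \<Longrightarrow> P k f = P k g"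
    and meas: "\<And>k. k < N \<Longrightarrow> {f\<in>space (PiM {k*B..<Suc k*B} (\<lambda>_. borel)). P k f}
                       \<in> sets (PiM {k*B..<Suc k*B} (\<lambda>_. borel))"
  shows "measure M (\<Inter>k<N. {\<omega>\<in>space M. P k (\<lambda>i. W (real (Suc i) * d) \<omega> - W (real i * d) \<omega>)})
       = (\<Prod>k<N. measure M {\<omega>\<in>space M. P k (\<lambda>i. W (real (Suc i) * d) \<omega> - W (real i * d) \<omega>)})"
proof -
  interpret prob_space M by (rule BM_prob[OF BM])
  define L where "L = N * B"
  define ts where "ts = map (\<lambda>j. real j * d) [0..<Suc L]"
  define X where "X i \<omega> = W (real (Suc i) * d) \<omega> - W (real i * d) \<omega>" for i \<omega>
  define K where "K k = {k*B..<Suc k*B}" for k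
  have tsn: "ts ! j = real j * d" if "j < Suc L" for j
    unfolding ts_def using that by (simp add: nth_map nth_upt del: upt_Suc)
  have sorted: "sorted_wrt (<) ts" unfolding ts_def sorted_wrt_map
    by (rule sorted_wrt_mono_rel[OF _ sorted_wrt_upt]) (use d in auto)
  have nonneg: "\<forall>t\<in>set ts. 0 \<le> t" unfolding ts_def using d by auto
  have len: "length ts - 1 = L" unfolding ts_def by simp
  have ind0: "indep_vars (\<lambda>_. borel) (\<lambda>i \<omega>. W (ts ! Suc i) \<omega> - W (ts ! i) \<omega>) {..<L}"
    using BM_indep[OF BM sorted nonneg] unfolding len .
  have ind: "indep_vars (\<lambda>_. borel) X {..<L}"
  proof -
    have "indep_vars (\<lambda>_. borel) (\<lambda>i \<omega>. W (ts ! Suc i) \<omega> - W (ts ! i) \<omega>) {..<L}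
        \<longleftrightarrow> indep_vars (\<lambda>_. borel) X {..<L}"
      by (rule indep_vars_cong) (auto simp: X_def tsn fun_eq_iff)
    thus ?thesis using ind0 by simp
  qed
  have Ksub: "K k \<subseteq> {..<L}" if "k \<in> {..<N}" for k
  proof -
    have "Suc k * B \<le> N * B" using that by (intro mult_right_mono) auto
    thus ?thesis unfolding K_def L_def by auto
  qed
  have disj: "disjoint_family_on K {..<N}"
  unfolding disjoint_family_on_def
  proof (intro ballI impI)
    fix k k' assume kk: "k \<in> {..<N}" "k' \<in> {..<N}" "k \<noteq> k'"
    show "K k \<inter> K k' = {}"
    proof (rule ccontr)
      assume "K k \<inter> K k' \<noteq> {}"
      then obtain i where "i \<in> K k" "i \<in> K k'" by blast
      hence i: "k*B \<le> i" "i < Suc k * B" "k'*B \<le> i" "i < Suc k' * B" unfolding K_def by auto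
      hence "k * B < Suc k' * B" "k' * B < Suc k * B" by auto
      hence "k < Suc k'" "k' < Suc k" by (meson mult_less_cancel2)+
      thus False using kk by auto
    qed
  qed
  have indR: "indep_vars (\<lambda>k. PiM (K k) (\<lambda>_. borel)) (\<lambda>k \<omega>. restrict (\<lambda>i. X i \<omega>) (K k)) {..<N}"
    by (rule indep_vars_restrict[OF ind Ksub disj])
  define S where "S k = {f\<in>space (PiM (K k) (\<lambda>_. borel)). P k f}" for k
  have Ssets: "S k \<in> sets (PiM (K k) (\<lambda>_. borel))" if "k \<in> {..<N}" for k
    using meas[of k] that unfolding S_def K_def by auto
  have pre: "(\<lambda>\<omega>. restrict (\<lambda>i. X i \<omega>) (K k)) -` S k \<inter> space M = {\<omega>\<in>space M. P k (\<lambda>i. X i \<omega>)}"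
    if "k \<in> {..<N}" for k
  proof -
    { fix \<omega>
      have "P k (restrict (\<lambda>i. X i \<omega>) (K k)) = P k (\<lambda>i. X i \<omega>)"
        by (rule loc) (use that in \<open>auto simp: K_def\<close>) }
    thus ?thesis unfolding S_def by (auto simp: space_PiM)
  qed
  have "prob (\<Inter>k\<in>{..<N}. (\<lambda>\<omega>. restrict (\<lambda>i. X i \<omega>) (K k)) -` S k \<inter> space M)
      = (\<Prod>k\<in>{..<N}. prob ((\<lambda>\<omega>. restrict (\<lambda>i. X i \<omega>) (K k)) -` S k \<inter> space M))"
  proof (rule indep_varsD[OF indR])
    have "0 \<in> {..<N}" using N by simp
    thus "{..<N} \<noteq> {}" by blast
  qed (use Ssets in auto)
  moreover have "(\<Inter>k\<in>{..<N}. (\<lambda>\<omega>. restrict (\<lambda>i. X i \<omega>) (K k)) -` S k \<inter> space M)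
      = (\<Inter>k\<in>{..<N}. {\<omega>\<in>space M. P k (\<lambda>i. X i \<omega>)})"
    using pre by (intro arg_cong[where f=Inter] image_cong refl) auto
  moreover have "(\<Prod>k\<in>{..<N}. prob ((\<lambda>\<omega>. restrict (\<lambda>i. X i \<omega>) (K k)) -` S k \<inter> space M))
      = (\<Prod>k\<in>{..<N}. prob {\<omega>\<in>space M. P k (\<lambda>i. X i \<omega>)})"
    by (rule prod.cong[OF refl]) (simp add: pre)
  ultimately show ?thesis unfolding X_def by simp
qed

lemma sum_pim_meas:
  assumes "A \<subseteq> K"
  shows "(\<lambda>f. \<Sum>j\<in>A. f j) \<in> borel_measurable (PiM K (\<lambda>_. (borel :: real measure)))"
  by (rule borel_measurable_sum) (use assms in \<open>auto intro!: measurable_component_singleton\<close>)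

lemma pim_set_le:
  assumes "A \<subseteq> K"
  shows "{f\<in>space (PiM K (\<lambda>_. borel)). \<bar>(\<Sum>j\<in>A. f j) - c\<bar> \<le> (e::real)} \<in> sets (PiM K (\<lambda>_. borel))"
proof -
  have [measurable]: "(\<lambda>f. \<Sum>j\<in>A. f j) \<in> borel_measurable (PiM K (\<lambda>_. (borel :: real measure)))"
    by (rule sum_pim_meas[OF assms])
  show ?thesis by measurable
qed

lemma tele:
  fixes W :: "real \<Rightarrow> 'w \<Rightarrow> real"
  assumes "p \<le> q"
  shows "(\<Sum>j\<in>{p..<q}. W (real (Suc j) * d) \<omega> - W (real j * d) \<omega>) = W (real q * d) \<omega> - W (real p * d) \<omega>"
  using sum_Suc_diff'[OF assms, of "\<lambda>j. W (real j * d) \<omega>"] by simp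

definition Bw :: "'w measure \<Rightarrow> (real \<Rightarrow> 'w \<Rightarrow> real) \<Rightarrow> real \<Rightarrow> real \<Rightarrow> real \<Rightarrow> (nat \<Rightarrow> real) \<Rightarrow> nat \<Rightarrow> nat \<Rightarrow> 'w set" where
  "Bw M W h a \<eta> rs n k = {\<omega>\<in>space M. \<bar>W (real (Suc k) * h) \<omega> - W (real k * h) \<omega> - a * h\<bar> \<le> \<eta> \<and>
     (\<forall>m\<le>n. \<forall>i<(2::nat)^m. \<bar>W (real k * h + real (Suc i) * h / 2^m) \<omega> - W (real k * h + real i * h / 2^m) \<omega>\<bar> \<le> rs m)}"

lemma pos_id:
  assumes "m \<le> n"
  shows "real (k * 2^n + i * 2^(n-m)) * (h / 2^n) = real k * h + real i * h / 2^m"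
proof -
  have "(2::real)^n = 2^(n-m) * 2^m" using assms by (simp add: power_add[symmetric])
  thus ?thesis by (simp add: field_simps)
qed

lemma Bw_Xform:
  fixes n k :: nat and a h \<eta> :: real and rs :: "nat \<Rightarrow> real"
  defines "B \<equiv> (2::nat)^n"
  defines "Pk \<equiv> \<lambda>k (f::nat \<Rightarrow> real). \<bar>(\<Sum>i\<in>{k*B..<Suc k*B}. f i) - a*h\<bar> \<le> \<eta> \<and>
       (\<forall>m\<le>n. \<forall>i<(2::nat)^m. \<bar>\<Sum>j\<in>{k*B + i*2^(n-m)..<k*B + Suc i*2^(n-m)}. f j\<bar> \<le> rs m)"
  shows "Bw M W h a \<eta> rs n k = {\<omega>\<in>space M. Pk k (\<lambda>i. W (real (Suc i) * (h/2^n)) \<omega> - W (real i * (h/2^n)) \<omega>)}"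
    and "\<And>f g. (\<And>i. i \<in> {k*B..<Suc k*B} \<Longrightarrow> f i = g i) \<Longrightarrow> Pk k f = Pk k g"
    and "{f\<in>space (PiM {k*B..<Suc k*B} (\<lambda>_. borel)). Pk k f} \<in> sets (PiM {k*B..<Suc k*B} (\<lambda>_. borel))"
proof -
  have subK: "{k*B + i*2^(n-m)..<k*B + Suc i*2^(n-m)} \<subseteq> {k*B..<Suc k*B}" if "m \<le> n" "i < 2^m" for m i
  proof -
    have "Suc i * 2^(n-m) \<le> 2^m * 2^(n-m)" using that by (intro mult_right_mono) auto
    also have "\<dots> = B" unfolding B_def using that by (simp add: power_add[symmetric])
    finally show ?thesis by auto
  qed
  { fix \<omega>
    let ?f = "\<lambda>i. W (real (Suc i) * (h/2^n)) \<omega> - W (real i * (h/2^n)) \<omega>"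
    have e1: "(\<Sum>i\<in>{k*B..<Suc k*B}. ?f i) = W (real (Suc k) * h) \<omega> - W (real k * h) \<omega>"
    proof -
      have "(\<Sum>i\<in>{k*B..<Suc k*B}. ?f i) = W (real (Suc k * B) * (h/2^n)) \<omega> - W (real (k * B) * (h/2^n)) \<omega>"
        by (rule tele) simp
      moreover have "real (Suc k * B) * (h/2^n) = real (Suc k) * h" "real (k * B) * (h/2^n) = real k * h"
        unfolding B_def by (simp_all add: field_simps)
      ultimately show ?thesis by simp
    qed
    have e2: "(\<Sum>j\<in>{k*B + i*2^(n-m)..<k*B + Suc i*2^(n-m)}. ?f j) =
        W (real k * h + real (Suc i) * h / 2^m) \<omega> - W (real k * h + real i * h / 2^m) \<omega>" if "m \<le> n" for m i
    proof -
      have "(\<Sum>j\<in>{k*B + i*2^(n-m)..<k*B + Suc i*2^(n-m)}. ?f j) =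
          W (real (k*B + Suc i*2^(n-m)) * (h/2^n)) \<omega> - W (real (k*B + i*2^(n-m)) * (h/2^n)) \<omega>"
        by (rule tele) simp
      thus ?thesis unfolding B_def using pos_id[OF that, of k "Suc i" h] pos_id[OF that, of k i h] by simp
    qed
    have "Pk k ?f \<longleftrightarrow> (\<bar>W (real (Suc k) * h) \<omega> - W (real k * h) \<omega> - a * h\<bar> \<le> \<eta> \<and>
     (\<forall>m\<le>n. \<forall>i<(2::nat)^m. \<bar>W (real k * h + real (Suc i) * h / 2^m) \<omega> - W (real k * h + real i * h / 2^m) \<omega>\<bar> \<le> rs m))"
      unfolding Pk_def e1 using e2 by simp }
  thus "Bw M W h a \<eta> rs n k = {\<omega>\<in>space M. Pk k (\<lambda>i. W (real (Suc i) * (h/2^n)) \<omega> - W (real i * (h/2^n)) \<omega>)}"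
    unfolding Bw_def by auto
  show "\<And>f g. (\<And>i. i \<in> {k*B..<Suc k*B} \<Longrightarrow> f i = g i) \<Longrightarrow> Pk k f = Pk k g"
  proof -
    fix f g :: "nat \<Rightarrow> real" assume fg: "\<And>i. i \<in> {k*B..<Suc k*B} \<Longrightarrow> f i = g i"
    have s1: "(\<Sum>i\<in>{k*B..<Suc k*B}. f i) = (\<Sum>i\<in>{k*B..<Suc k*B}. g i)" by (rule sum.cong[OF refl fg])
    have s2: "(\<Sum>j\<in>{k*B + i*2^(n-m)..<k*B + Suc i*2^(n-m)}. f j) = (\<Sum>j\<in>{k*B + i*2^(n-m)..<k*B + Suc i*2^(n-m)}. g j)"
      if "m \<le> n" "i < 2^m" for m i
      by (rule sum.cong[OF refl fg]) (use subK[OF that] in blast)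
    show "Pk k f = Pk k g" unfolding Pk_def s1 using s2 by (metis (no_types, lifting))
  qed
  let ?K = "{k*B..<Suc k*B}"
  let ?PM = "PiM ?K (\<lambda>_. borel) :: (nat \<Rightarrow> real) measure"
  have "{f\<in>space ?PM. Pk k f} = {f\<in>space ?PM. \<bar>(\<Sum>i\<in>?K. f i) - a*h\<bar> \<le> \<eta>} \<inter>
      {f\<in>space ?PM. \<forall>m\<in>{..n}. \<forall>i\<in>{..<(2::nat)^m}. \<bar>(\<Sum>j\<in>{k*B + i*2^(n-m)..<k*B + Suc i*2^(n-m)}. f j) - 0\<bar> \<le> rs m}"
    unfolding Pk_def by auto
  also have "\<dots> \<in> sets ?PM"
  proof (rule sets.Int)
    show "{f\<in>space ?PM. \<bar>(\<Sum>i\<in>?K. f i) - a*h\<bar> \<le> \<eta>} \<in> sets ?PM" by (rule pim_set_le) simp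
    show "{f\<in>space ?PM. \<forall>m\<in>{..n}. \<forall>i\<in>{..<(2::nat)^m}. \<bar>(\<Sum>j\<in>{k*B + i*2^(n-m)..<k*B + Suc i*2^(n-m)}. f j) - 0\<bar> \<le> rs m} \<in> sets ?PM"
      apply (rule sets.sets_Collect_countable_All'[OF _ countable_finite[OF finite_atMost]])
      apply (rule sets.sets_Collect_countable_All'[OF _ countable_finite[OF finite_lessThan]])
      apply (rule pim_set_le)
      apply (rule subK)
       apply auto
      done
  qed
  finally show "{f\<in>space (PiM {k*B..<Suc k*B} (\<lambda>_. borel)). Pk k f} \<in> sets (PiM {k*B..<Suc k*B} (\<lambda>_. borel))" .
qed

lemma diff_set_meas:
  assumes BM: "std_BM M W" and st: "0 \<le> s" "0 \<le> t"
  shows "{\<omega>\<in>space M. \<bar>W t \<omega> - W s \<omega> - c\<bar> \<le> e} \<in> sets M"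
    and "{\<omega>\<in>space M. e < \<bar>W t \<omega> - W s \<omega>\<bar>} \<in> sets M"
proof -
  have [measurable]: "W t \<in> borel_measurable M" "W s \<in> borel_measurable M"
    using BM_meas[OF BM] st by auto
  show "{\<omega>\<in>space M. \<bar>W t \<omega> - W s \<omega> - c\<bar> \<le> e} \<in> sets M" by measurable
  show "{\<omega>\<in>space M. e < \<bar>W t \<omega> - W s \<omega>\<bar>} \<in> sets M" by measurable
qed

lemma Bw_sets:
  assumes BM: "std_BM M W" and h: "h > 0"
  shows "Bw M W h a \<eta> rs n k \<in> sets M"
proof -
  have nn: "0 \<le> real k * h + real i * h / 2^m" for i m :: nat using h by simp
  have "Bw M W h a \<eta> rs n k = {\<omega>\<in>space M. \<bar>W (real (Suc k) * h) \<omega> - W (real k * h) \<omega> - a * h\<bar> \<le> \<eta>} \<inter>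
     {\<omega>\<in>space M. \<forall>m\<in>{..n}. \<forall>i\<in>{..<(2::nat)^m}. \<bar>W (real k * h + real (Suc i) * h / 2^m) \<omega> - W (real k * h + real i * h / 2^m) \<omega> - 0\<bar> \<le> rs m}"
    unfolding Bw_def by auto
  also have "\<dots> \<in> sets M"
    apply (rule sets.Int)
     apply (rule diff_set_meas(1)[OF BM]) using h apply simp_all[2]
    apply (rule sets.sets_Collect_countable_All'[OF _ countable_finite[OF finite_atMost]])
    apply (rule sets.sets_Collect_countable_All'[OF _ countable_finite[OF finite_lessThan]])
    apply (rule diff_set_meas(1)[OF BM nn nn])
    done
  finally show ?thesis .
qed

lemma Bw_prob:
  assumes BM: "std_BM M W" and h: "h > 0" and rs: "\<And>m. rs m > 0" and eta: "\<eta> > 0"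
  shows "2 * \<eta> * normal_density 0 (sqrt h) (\<bar>a * h\<bar> + \<eta>)
           - (\<Sum>m\<le>n. real (2^m) * (3 * (h / 2^m)\<^sup>2 / rs m ^ 4))
         \<le> measure M (Bw M W h a \<eta> rs n k)"
proof -
  interpret prob_space M by (rule BM_prob[OF BM])
  define t0 where "t0 = real k * h"
  define E where "E = {\<omega>\<in>space M. \<bar>W (real (Suc k) * h) \<omega> - W t0 \<omega> - a * h\<bar> \<le> \<eta>}"
  define big where "big m i = {\<omega>\<in>space M. rs m < \<bar>W (t0 + real (Suc i) * h / 2^m) \<omega> - W (t0 + real i * h / 2^m) \<omega>\<bar>}" for m i :: nat
  define U where "U = (\<Union>m\<in>{..n}. \<Union>i\<in>{..<(2::nat)^m}. big m i)"
  have t0: "0 \<le> t0" unfolding t0_def using h by simp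
  have nn: "0 \<le> t0 + real i * h / 2^m" for i m :: nat using h t0 by simp
  have Esets: "E \<in> sets M" unfolding E_def by (rule diff_set_meas(1)[OF BM t0]) (use h in simp)
  have bigsets: "big m i \<in> sets M" for m i unfolding big_def by (rule diff_set_meas(2)[OF BM nn nn])
  have Usets: "U \<in> sets M" unfolding U_def using bigsets by auto
  have eq: "Bw M W h a \<eta> rs n k = E - U"
    unfolding Bw_def E_def U_def big_def t0_def by (auto simp: not_less) (meson leD)
  have pE: "2 * \<eta> * normal_density 0 (sqrt h) (\<bar>a * h\<bar> + \<eta>) \<le> prob E"
  proof -
    have "2 * \<eta> * normal_density 0 (sqrt (real (Suc k) * h - t0)) (\<bar>a * h\<bar> + \<eta>) \<le> prob E"
      unfolding E_def by (rule inc_interval_lb[OF BM t0 _ eta]) (use h in \<open>simp add: t0_def algebra_simps\<close>)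
    moreover have "real (Suc k) * h - t0 = h" unfolding t0_def by (simp add: algebra_simps)
    ultimately show ?thesis by simp
  qed
  have pbig: "prob (big m i) \<le> 3 * (h / 2^m)\<^sup>2 / rs m ^ 4" for m i
  proof -
    have "prob (big m i) \<le> 3 * ((t0 + real (Suc i) * h / 2^m) - (t0 + real i * h / 2^m))\<^sup>2 / rs m ^ 4"
      unfolding big_def by (rule inc_tail_ub[OF BM nn _ rs]) (use h in \<open>simp add: field_simps\<close>)
    moreover have "(t0 + real (Suc i) * h / 2^m) - (t0 + real i * h / 2^m) = h / 2^m"
      by (simp add: field_simps)
    ultimately show ?thesis by simp
  qed
  have pU: "prob U \<le> (\<Sum>m\<le>n. real (2^m) * (3 * (h / 2^m)\<^sup>2 / rs m ^ 4))"
  proof -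
    have "prob U \<le> (\<Sum>m\<in>{..n}. prob (\<Union>i\<in>{..<(2::nat)^m}. big m i))"
      unfolding U_def by (rule finite_measure_subadditive_finite) (use bigsets in auto)
    also have "\<dots> \<le> (\<Sum>m\<in>{..n}. \<Sum>i\<in>{..<(2::nat)^m}. prob (big m i))"
      by (intro sum_mono finite_measure_subadditive_finite) (use bigsets in auto)
    also have "\<dots> \<le> (\<Sum>m\<in>{..n}. \<Sum>i\<in>{..<(2::nat)^m}. 3 * (h / 2^m)\<^sup>2 / rs m ^ 4)"
      by (intro sum_mono pbig)
    also have "\<dots> = (\<Sum>m\<le>n. real (2^m) * (3 * (h / 2^m)\<^sup>2 / rs m ^ 4))" by simp
    finally show ?thesis .
  qed
  have "prob (E - U) = prob E - prob (E \<inter> U)" by (rule finite_measure_Diff'[OF Esets Usets])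
  moreover have "prob (E \<inter> U) \<le> prob U" by (rule finite_measure_mono[OF _ Usets]) auto
  ultimately show ?thesis unfolding eq using pE pU by linarith
qed

lemma level_bound:
  assumes BM: "std_BM M W" and N: "N \<ge> 1" and h: "h > 0" and rs: "\<And>m. rs m > 0" and eta: "\<eta> > 0"
    and pE: "pE \<le> 2 * \<eta> * normal_density 0 (sqrt h) (\<bar>a * h\<bar> + \<eta>)"
    and beta: "(\<Sum>m\<le>n. real (2^m) * (3 * (h / 2^m)\<^sup>2 / rs m ^ 4)) \<le> \<beta>"
    and pos: "0 \<le> pE - \<beta>"
  shows "(pE - \<beta>) ^ N \<le> measure M (\<Inter>k<N. Bw M W h a \<eta> rs n k)"
proof -
  define B where "B = (2::nat)^n"
  define Pk where "Pk = (\<lambda>k (f::nat \<Rightarrow> real). \<bar>(\<Sum>i\<in>{k*B..<Suc k*B}. f i) - a*h\<bar> \<le> \<eta> \<and>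
       (\<forall>m\<le>n. \<forall>i<(2::nat)^m. \<bar>\<Sum>j\<in>{k*B + i*2^(n-m)..<k*B + Suc i*2^(n-m)}. f j\<bar> \<le> rs m))"
  note X = Bw_Xform(1)[where n=n and a=a and h=h and \<eta>=\<eta> and rs=rs and M=M and W=W]
    Bw_Xform(2,3)[where n=n and a=a and h=h and \<eta>=\<eta> and rs=rs]
  have d: "h / 2^n > 0" using h by simp
  have X1: "Bw M W h a \<eta> rs n k = {\<omega>\<in>space M. Pk k (\<lambda>i. W (real (Suc i) * (h/2^n)) \<omega> - W (real i * (h/2^n)) \<omega>)}" for k
    unfolding Pk_def B_def by (rule X(1))
  have "measure M (\<Inter>k<N. {\<omega>\<in>space M. Pk k (\<lambda>i. W (real (Suc i) * (h/2^n)) \<omega> - W (real i * (h/2^n)) \<omega>)})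
       = (\<Prod>k<N. measure M {\<omega>\<in>space M. Pk k (\<lambda>i. W (real (Suc i) * (h/2^n)) \<omega> - W (real i * (h/2^n)) \<omega>)})"
  proof (rule block_indep[OF BM N d, where P=Pk and B=B])
    fix k f g assume "k < N" and fg: "\<And>i. i \<in> {k*B..<Suc k*B} \<Longrightarrow> (f::nat\<Rightarrow>real) i = g i"
    show "Pk k f = Pk k g" unfolding Pk_def B_def by (rule X(2)[OF fg[unfolded B_def]])
  next
    fix k assume "k < N"
    show "{f\<in>space (PiM {k*B..<Suc k*B} (\<lambda>_. borel)). Pk k f} \<in> sets (PiM {k*B..<Suc k*B} (\<lambda>_. borel))"
      unfolding Pk_def B_def by (rule X(3))
  qed
  hence eqP: "measure M (\<Inter>k<N. Bw M W h a \<eta> rs n k) = (\<Prod>k<N. measure M (Bw M W h a \<eta> rs n k))"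
    unfolding X1 .
  have "(pE - \<beta>) ^ N = (\<Prod>k<N. pE - \<beta>)" by simp
  also have "\<dots> \<le> (\<Prod>k<N. measure M (Bw M W h a \<eta> rs n k))"
  proof (rule prod_mono)
    fix k assume "k \<in> {..<N}"
    show "0 \<le> pE - \<beta> \<and> pE - \<beta> \<le> measure M (Bw M W h a \<eta> rs n k)"
      using pos pE beta Bw_prob[where rs=rs and a=a and n=n and k=k, OF BM h rs eta] by linarith
  qed
  finally show ?thesis using eqP by simp
qed

lemma rs_sum:
  assumes "\<rho> \<ge> 0"
  shows "(\<Sum>m\<le>n. \<rho> / 8 * (7/8::real)^m) \<le> \<rho>"
proof -
  have "(\<Sum>m\<le>n. \<rho> / 8 * (7/8::real)^m) = \<rho> / 8 * (\<Sum>m<Suc n. (7/8::real)^m)"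
    by (simp add: sum_distrib_left lessThan_Suc_atMost)
  also have "(\<Sum>m<Suc n. (7/8::real)^m) = (1 - (7/8)^Suc n) / (1 - 7/8)"
    by (subst sum_gp_strict) simp
  also have "\<rho> / 8 * ((1 - (7/8::real)^Suc n) / (1 - 7/8)) = \<rho> * (1 - (7/8)^Suc n)" by simp
  also have "\<dots> \<le> \<rho> * 1" using assms by (intro mult_left_mono) auto
  finally show ?thesis by simp
qed

lemma beta_term:
  assumes "\<rho> > 0"
  shows "real (2^m) * (3 * (h / 2^m)\<^sup>2 / (\<rho> / 8 * (7/8::real)^m) ^ 4) = 3 * 4096 * h\<^sup>2 / \<rho>^4 * (2048/2401)^m"
proof -
  have pw: "((x::real)^m)^k = (x^k)^m" for x k by (simp flip: power_mult add: mult.commute)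
  have a: "(\<rho> / 8 * (7/8::real)^m) ^ 4 = \<rho>^4 / 4096 * (2401/4096)^m"
    by (simp add: power_mult_distrib pw power_divide)
  have b: "(h / 2^m)\<^sup>2 = h\<^sup>2 / 4^m"
    by (simp add: power_divide pw)
  have c: "(2048/2401::real)^m = 2^m * 4096^m / (4^m * 2401^m)"
  proof -
    have "(2048/2401::real) = 2 * 4096 / (4 * 2401)" by simp
    thus ?thesis by (simp only: power_divide power_mult_distrib)
  qed
  show ?thesis unfolding a b c using assms by (simp add: field_simps power_divide)
qed

lemma beta_sum:
  assumes "\<rho> > 0" "h > 0"
  shows "(\<Sum>m\<le>n. real (2^m) * (3 * (h / 2^m)\<^sup>2 / (\<rho> / 8 * (7/8::real)^m) ^ 4)) \<le> 86016 * h\<^sup>2 / \<rho>^4"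
proof -
  have "(\<Sum>m\<le>n. real (2^m) * (3 * (h / 2^m)\<^sup>2 / (\<rho> / 8 * (7/8::real)^m) ^ 4))
      = 3 * 4096 * h\<^sup>2 / \<rho>^4 * (\<Sum>m<Suc n. (2048/2401::real)^m)"
    using beta_term[OF assms(1)] by (simp add: sum_distrib_left lessThan_Suc_atMost)
  also have "\<dots> \<le> 3 * 4096 * h\<^sup>2 / \<rho>^4 * (1 / (1 - 2048/2401))"
  proof (rule mult_left_mono)
    have "(\<Sum>m<Suc n. (2048/2401::real)^m) = (1 - (2048/2401)^Suc n) / (1 - 2048/2401)"
      by (subst sum_gp_strict) simp
    also have "\<dots> \<le> 1 / (1 - 2048/2401)"
      by (intro divide_right_mono) auto
    finally show "(\<Sum>m<Suc n. (2048/2401::real)^m) \<le> 1 / (1 - 2048/2401)" .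
  qed (use assms in simp)
  also have "\<dots> = (29503488 / 353) * (h\<^sup>2 / \<rho>^4)" by simp
  also have "\<dots> \<le> 86016 * (h\<^sup>2 / \<rho>^4)" by (intro mult_right_mono) auto
  also have "\<dots> = 86016 * h\<^sup>2 / \<rho>^4" by simp
  finally show ?thesis .
qed

lemma asymp_choice:
  fixes K C c :: real assumes "K > 0" "C > 0" "c > 0"
  shows "eventually (\<lambda>N::nat. K / N^2 < C / N * exp (- (c / N)) / sqrt (1 / N)) at_top"
  using assms by real_asymp

lemma asymp_choice2:
  fixes A :: real assumes "A > 0" "D > 0"
  shows "eventually (\<lambda>N::nat. A / N < D) at_top"
  using assms by real_asymp

lemma tube:
  assumes BM: "std_BM M W" and dl: "\<delta> > 0" and T: "T > 0"
  shows "\<exists>G\<in>sets M. 0 < measure M G \<and> G \<subseteq> space M \<and> (\<forall>\<omega>\<in>G. \<forall>r\<in>{0..T}. \<bar>W r \<omega> - a * r\<bar> \<le> \<delta>)"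
proof -
  interpret prob_space M by (rule BM_prob[OF BM])
  define \<rho> where "\<rho> = \<delta> / 3"
  define C where "C = 2 * \<delta> / 3 / sqrt (2 * pi * T)"
  define c where "c = (\<bar>a\<bar> * T + \<delta> / 3)\<^sup>2 / (2 * T)"
  define K where "K = 86016 * T\<^sup>2 / \<rho> ^ 4"
  have \<rho>: "\<rho> > 0" unfolding \<rho>_def using dl by simp
  have Cp: "C > 0" unfolding C_def using dl T by simp
  have "0 \<le> \<bar>a\<bar> * T" using T by simp
  hence "0 < \<bar>a\<bar> * T + \<delta> / 3" using dl by linarith
  hence cp: "c > 0" unfolding c_def using T by simp
  have Kp: "K > 0" unfolding K_def using T \<rho> by simp
  have ev: "eventually (\<lambda>N::nat. (K / N^2 < C / N * exp (- (c / N)) / sqrt (1 / N)) \<and>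
      (\<bar>a\<bar> + 1) * T / N < \<delta> / 3 \<and> N \<ge> (1::nat)) at_top"
  proof -
    have e2: "eventually (\<lambda>N::nat. (\<bar>a\<bar> + 1) * T / N < \<delta> / 3) at_top"
      by (rule asymp_choice2) (use T dl in \<open>auto intro: add_nonneg_pos\<close>)
    show ?thesis by (intro eventually_conj asymp_choice[OF Kp Cp cp] e2) (auto simp: eventually_sequentially)
  qed
  then obtain N :: nat where N: "K / N^2 < C / N * exp (- (c / N)) / sqrt (1 / N)"
      "(\<bar>a\<bar> + 1) * T / N < \<delta> / 3" "N \<ge> (1::nat)"
    unfolding eventually_sequentially by auto
  have Np: "real N > 0" using N(3) by simp
  define h where "h = T / N"
  define \<eta> where "\<eta> = \<delta> / (3 * N)"
  define rs where "rs m = \<rho> / 8 * (7/8::real)^m" for m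
  define pE where "pE = 2 * \<eta> * normal_density 0 (sqrt h) (\<bar>a * h\<bar> + \<eta>)"
  define \<beta> where "\<beta> = 86016 * h\<^sup>2 / \<rho> ^ 4"
  have h: "h > 0" unfolding h_def using T Np by simp
  have eta: "\<eta> > 0" unfolding \<eta>_def using dl Np by simp
  have rsp: "\<And>m. rs m > 0" unfolding rs_def using \<rho> by simp
  have pE_eq: "pE = C / N * exp (- (c / N)) / sqrt (1 / N)"
  proof -
    have e1: "(sqrt h)\<^sup>2 = h" using h by simp
    have e2: "\<bar>a * h\<bar> + \<eta> = (\<bar>a\<bar> * T + \<delta> / 3) / N"
      unfolding h_def \<eta>_def using T Np by (simp add: abs_mult field_simps)
    have e3: "((\<bar>a\<bar> * T + \<delta> / 3) / N)\<^sup>2 / (2 * h) = c / N"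
      unfolding c_def h_def using T Np by (simp add: power2_eq_square field_simps)
    have e4: "sqrt (2 * pi * h) = sqrt (2 * pi * T) * sqrt (1 / N)"
      unfolding h_def by (simp add: real_sqrt_mult[symmetric])
    have "pE = 2 * \<eta> * (1 / sqrt (2 * pi * h) * exp (- (((\<bar>a\<bar> * T + \<delta> / 3) / N)\<^sup>2 / (2 * h))))"
      unfolding pE_def normal_density_def e1 e2 by simp
    also have "\<dots> = 2 * \<eta> * (1 / (sqrt (2 * pi * T) * sqrt (1 / N)) * exp (- (c / N)))"
      unfolding e3 e4 ..
    also have "\<dots> = C / N * exp (- (c / N)) / sqrt (1 / N)"
      unfolding C_def \<eta>_def by (simp add: field_simps)
    finally show ?thesis .
  qed
  have beta_eq: "\<beta> = K / N^2"
    unfolding \<beta>_def K_def h_def by (simp add: power2_eq_square field_simps)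
  have pos: "0 < pE - \<beta>" using N(1) pE_eq beta_eq by simp
  define G where "G n = (\<Inter>k<N. Bw M W h a \<eta> rs n k)" for n
  have lb: "(pE - \<beta>) ^ N \<le> measure M (G n)" for n
    unfolding G_def
  proof (rule level_bound[OF BM N(3) h rsp eta])
    show "pE \<le> 2 * \<eta> * normal_density 0 (sqrt h) (\<bar>a * h\<bar> + \<eta>)" unfolding pE_def ..
    show "(\<Sum>m\<le>n. real (2^m) * (3 * (h / 2^m)\<^sup>2 / rs m ^ 4)) \<le> \<beta>"
      unfolding rs_def \<beta>_def by (rule beta_sum[OF \<rho> h])
    show "0 \<le> pE - \<beta>" using pos by simp
  qed
  have N0: "{..<N} \<noteq> {}" using N(3) by (metis lessThan_empty_iff not_one_le_zero)
  have Gsets: "G n \<in> sets M" for n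
    unfolding G_def by (rule sets.finite_INT) (use N0 Bw_sets[OF BM h] in auto)
  have dec: "decseq G"
  proof (rule decseq_SucI)
    fix n
    have "Bw M W h a \<eta> rs (Suc n) k \<subseteq> Bw M W h a \<eta> rs n k" for k
      unfolding Bw_def by auto
    thus "G (Suc n) \<subseteq> G n" unfolding G_def by blast
  qed
  define Gf where "Gf = (\<Inter>n. G n)"
  have lim: "(\<lambda>n. measure M (G n)) \<longlonglongrightarrow> measure M Gf"
    unfolding Gf_def by (rule finite_Lim_measure_decseq) (use Gsets dec in auto)
  have "(pE - \<beta>) ^ N \<le> measure M Gf"
    by (rule LIMSEQ_le_const[OF lim]) (use lb in auto)
  moreover have "0 < (pE - \<beta>) ^ N" using pos by simp
  ultimately have mpos: "0 < measure M Gf" by linarith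
  have Gfsets: "Gf \<in> sets M" unfolding Gf_def using Gsets by auto
  have wB: "\<omega> \<in> Bw M W h a \<eta> rs n k" if "\<omega> \<in> Gf" "k < N" for \<omega> n k
    using that unfolding Gf_def G_def by auto
  have Gfsp: "Gf \<subseteq> space M"
  proof
    fix \<omega> assume "\<omega> \<in> Gf"
    hence "\<omega> \<in> Bw M W h a \<eta> rs 0 0" using wB N(3) by simp
    thus "\<omega> \<in> space M" unfolding Bw_def by auto
  qed
  have tubeprop: "\<forall>r\<in>{0..T}. \<bar>W r \<omega> - a * r\<bar> \<le> \<delta>" if \<omega>: "\<omega> \<in> Gf" for \<omega>
  proof
    fix r assume r: "r \<in> {0..T}"
    have \<omega>sp: "\<omega> \<in> space M" using \<omega> Gfsp by auto
    have path: "W 0 \<omega> = 0" "continuous_on {0..} (\<lambda>t. W t \<omega>)" using BM_path[OF BM \<omega>sp] by auto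
    have inc: "\<bar>W (real (Suc k) * h) \<omega> - W (real k * h) \<omega> - a * h\<bar> \<le> \<eta>" if "k < N" for k
      using wB[OF \<omega> that, of 0] unfolding Bw_def by auto
    have lv: "\<forall>m. \<forall>i<(2::nat)^m. \<bar>W (real k * h + real (Suc i) * h / 2^m) \<omega> - W (real k * h + real i * h / 2^m) \<omega>\<bar> \<le> rs m"
      if "k < N" for k
    proof (intro allI impI)
      fix m i :: nat assume "i < 2^m"
      thus "\<bar>W (real k * h + real (Suc i) * h / 2^m) \<omega> - W (real k * h + real i * h / 2^m) \<omega>\<bar> \<le> rs m"
        using wB[OF \<omega> that, of m] unfolding Bw_def by auto
    qed
    have blk: "\<forall>r\<in>{real k * h..real k * h + h}. \<bar>W r \<omega> - W (real k * h) \<omega>\<bar> \<le> \<rho>" if "k < N" for k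
    proof (rule chain_all[where w="\<lambda>r. W r \<omega>", OF lv[OF that] _ _ h])
      show "\<forall>n. (\<Sum>m\<le>n. rs m) \<le> \<rho>" unfolding rs_def using rs_sum[of \<rho>] \<rho> by simp
      show "continuous_on {real k * h..real k * h + h} (\<lambda>r. W r \<omega>)"
        by (rule continuous_on_subset[OF path(2)]) (use h in auto)
    qed
    have grid: "\<bar>W (real k * h) \<omega> - a * (real k * h)\<bar> \<le> real k * \<eta>" if "k \<le> N" for k
      using that
    proof (induction k)
      case 0 thus ?case using path(1) by simp
    next
      case (Suc k)
      hence "k < N" by simp
      from inc[OF this] Suc.IH[OF less_imp_le[OF this]]
      show ?case by (simp add: algebra_simps abs_if split: if_splits) linarith?
    qed
    define k where "k = min (N - 1) (nat \<lfloor>r / h\<rfloor>)"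
    have kN: "k < N" unfolding k_def using N(3) by auto
    have kr: "real k * h \<le> r"
    proof -
      have "real k \<le> real (nat \<lfloor>r / h\<rfloor>)" unfolding k_def by simp
      also have "\<dots> \<le> r / h" using r h by simp
      finally show ?thesis using h by (simp add: field_simps)
    qed
    have rk: "r \<le> real k * h + h"
    proof (cases "nat \<lfloor>r / h\<rfloor> \<le> N - 1")
      case True
      hence "k = nat \<lfloor>r / h\<rfloor>" unfolding k_def by simp
      moreover have "r / h < real (nat \<lfloor>r / h\<rfloor>) + 1" using r h by linarith
      ultimately show ?thesis using h by (simp add: field_simps)
    next
      case False
      hence "k = N - 1" unfolding k_def by simp
      hence "real k * h + h = real N * h" using N(3) by (simp add: of_nat_diff algebra_simps)
      also have "\<dots> = T" unfolding h_def using Np by simp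
      finally show ?thesis using r by simp
    qed
    have t1: "\<bar>W r \<omega> - W (real k * h) \<omega>\<bar> \<le> \<rho>" using blk[OF kN] kr rk by auto
    have t2: "\<bar>W (real k * h) \<omega> - a * (real k * h)\<bar> \<le> real k * \<eta>" using grid kN by simp
    have t3: "real k * \<eta> \<le> \<delta> / 3"
    proof -
      have "real k * \<eta> \<le> real N * \<eta>" using kN eta by (intro mult_right_mono) auto
      also have "\<dots> = \<delta> / 3" unfolding \<eta>_def using Np by simp
      finally show ?thesis .
    qed
    have t4: "\<bar>a * r - a * (real k * h)\<bar> \<le> \<delta> / 3"
    proof -
      have "a * r - a * (real k * h) = a * (r - real k * h)" by (simp add: algebra_simps)
      hence "\<bar>a * r - a * (real k * h)\<bar> = \<bar>a\<bar> * \<bar>r - real k * h\<bar>" by (simp add: abs_mult)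
      also have "\<bar>r - real k * h\<bar> = r - real k * h" using kr by simp
      finally have "\<bar>a * r - a * (real k * h)\<bar> = \<bar>a\<bar> * (r - real k * h)" .
      also have "\<dots> \<le> (\<bar>a\<bar> + 1) * h" using kr rk by (intro mult_mono) auto
      also have "\<dots> = (\<bar>a\<bar> + 1) * T / N" unfolding h_def by simp
      finally show ?thesis using N(2) by linarith
    qed
    show "\<bar>W r \<omega> - a * r\<bar> \<le> \<delta>" using t1 t2 t3 t4 unfolding \<rho>_def by linarith
  qed
  show ?thesis using Gfsets mpos Gfsp tubeprop by blast
qed

lemma bnd_props:
  assumes "constant_boundary b \<or> collapsing_boundary b"
  shows "(\<forall>t\<ge>0. b t > 0) \<and> continuous_on {0..} b \<and> (\<forall>s t. 0 \<le> s \<and> s \<le> t \<longrightarrow> b t \<le> b s)"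
  using assms
proof
  assume "constant_boundary b"
  then obtain B where B: "B > 0" "\<forall>t\<ge>0. b t = B" unfolding constant_boundary_def by auto
  have "continuous_on {0..} b"
    by (rule continuous_on_eq[of _ "\<lambda>_. B"]) (use B in auto)
  thus ?thesis using B by auto
next
  assume "collapsing_boundary b"
  hence c: "\<forall>t\<ge>0. b t > 0" "continuous_on {0..} b" "\<forall>s t. 0 \<le> s \<and> s < t \<longrightarrow> b t < b s"
    unfolding collapsing_boundary_def by auto
  have "\<forall>s t. 0 \<le> s \<and> s \<le> t \<longrightarrow> b t \<le> b s"
  proof (intro allI impI)
    fix s t :: real assume st: "0 \<le> s \<and> s \<le> t"
    show "b t \<le> b s"
    proof (cases "s = t")
      case False
      hence "s < t" using st by simp
      thus ?thesis using c(3) st by (simp add: less_imp_le)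
    qed simp
  qed
  thus ?thesis using c by auto
qed

lemma in_upper_by:
  assumes BM: "std_BM M W" and \<omega>: "\<omega> \<in> space M" and bc: "continuous_on {0..} b"
    and bpos: "\<And>t. t \<ge> 0 \<Longrightarrow> b t > 0"
    and s: "s \<in> {0..T}" "b s \<le> ddm_proc m sg W s \<omega>" "\<forall>r\<in>{0..s}. - b r < ddm_proc m sg W r \<omega>"
  shows "\<omega> \<in> upper_by m sg W b T"
proof -
  have p: "W 0 \<omega> = 0" "continuous_on {0..} (\<lambda>t. W t \<omega>)" using BM_path[OF BM \<omega>] by auto
  have Zc: "continuous_on {0..} (\<lambda>t. ddm_proc m sg W t \<omega>)" by (rule ddm_cont) (rule p(2))
  have "\<exists>s\<le>T. first_hit_upper_at b (\<lambda>t. ddm_proc m sg W t \<omega>) s"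
    by (subst path_char[OF Zc bc bpos]) (use p(1) s in \<open>auto simp: ddm_proc_def\<close>)
  thus ?thesis unfolding upper_by_def by simp
qed

lemma upper_by_D:
  assumes BM: "std_BM M W" and \<omega>: "\<omega> \<in> space M" and bc: "continuous_on {0..} b"
    and bpos: "\<And>t. t \<ge> 0 \<Longrightarrow> b t > 0" and u: "\<omega> \<in> upper_by m sg W b T"
  shows "\<exists>s\<in>{0..T}. b s \<le> ddm_proc m sg W s \<omega> \<and> (\<forall>r\<in>{0..s}. - b r < ddm_proc m sg W r \<omega>)"
proof -
  have p: "W 0 \<omega> = 0" "continuous_on {0..} (\<lambda>t. W t \<omega>)" using BM_path[OF BM \<omega>] by auto
  have Zc: "continuous_on {0..} (\<lambda>t. ddm_proc m sg W t \<omega>)" by (rule ddm_cont) (rule p(2))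
  have "\<exists>s\<le>T. first_hit_upper_at b (\<lambda>t. ddm_proc m sg W t \<omega>) s" using u unfolding upper_by_def by simp
  thus ?thesis
    by (subst (asm) path_char[OF Zc bc bpos]) (use p(1) in \<open>auto simp: ddm_proc_def\<close>)
qed

lemma fsd_arith:
  fixes u1 u2 p1 p2 :: real
  assumes "0 \<le> u1" "u1 \<le> u2" "u2 \<le> p2" "0 \<le> p1"
  shows "u1 / p1 \<le> p2 / p1 * (u2 / p2)"
proof (cases "p1 = 0")
  case True thus ?thesis by simp
next
  case False
  hence p1: "p1 > 0" using assms by simp
  show ?thesis
  proof (cases "p2 = 0")
    case True
    hence "u1 = 0" using assms by simp
    thus ?thesis using True by simp
  next
    case False
    hence "p2 / p1 * (u2 / p2) = u2 / p1" by simp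
    thus ?thesis using assms p1 by (simp add: divide_right_mono)
  qed
qed

lemma sfsd_arith:
  fixes u1 u2 p1 p2 :: real
  assumes "0 \<le> u1" "u1 < u2" "u2 \<le> p2" "0 < p1"
  shows "u1 / p1 < p2 / p1 * (u2 / p2)"
proof -
  have "p2 > 0" using assms by simp
  hence "p2 / p1 * (u2 / p2) = u2 / p1" by simp
  thus ?thesis using assms by (simp add: divide_strict_right_mono)
qed

theorem proposition6:
  fixes X :: "'a set" and D :: "('a \<times> 'a) set" and u :: "'a \<Rightarrow> real"
    and M :: "'w measure" and W :: "real \<Rightarrow> 'w \<Rightarrow> real"
    and mu :: "'a \<Rightarrow> 'a \<Rightarrow> real" and sg :: real and b :: "real \<Rightarrow> real"
    and p :: "'a \<Rightarrow> 'a \<Rightarrow> real" and F :: "'a \<Rightarrow> 'a \<Rightarrow> real \<Rightarrow> real"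
    and x y :: 'a
  assumes "finite X"
    and "D \<subseteq> {(a, c). a \<in> X \<and> c \<in> X \<and> a \<noteq> c}"
    and "D \<noteq> {}"
    and "\<forall>(a, c)\<in>D. (c, a) \<in> D"
    and "DDM_generates D u M W mu sg b p F"
    and "(x, y) \<in> D"
  shows "(u x \<ge> u y \<longrightarrow> q_FSD (p x y / p y x) (F y x) (F x y)) \<and>
         (u x > u y \<longrightarrow> q_SFSD (p x y / p y x) (F y x) (F x y))"
proof -
  have G: "std_BM M W" "sg > 0" "constant_boundary b \<or> collapsing_boundary b"
    "\<forall>(x,y)\<in>D. mu x y = - mu y x \<and> (mu x y \<ge> 0 \<longleftrightarrow> u x - u y \<ge> 0)"
    "\<forall>(x,y)\<in>D. p x y = measure M (upper_chosen (mu x y) sg W b \<inter> space M)"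
    "\<forall>(x,y)\<in>D. \<forall>t\<ge>0. F x y t =
        measure M (upper_by (mu x y) sg W b t \<inter> space M) /
        measure M (upper_chosen (mu x y) sg W b \<inter> space M)"
    using assms(5) unfolding DDM_generates_def by blast+
  have BM: "std_BM M W" and sg: "sg > 0" and bnd: "constant_boundary b \<or> collapsing_boundary b"
    using G(1-3) .
  interpret prob_space M by (rule BM_prob[OF BM])
  have xy: "(x, y) \<in> D" by fact
  have yx: "(y, x) \<in> D" using assms(4) xy by auto
  have d1: "mu x y = - mu y x \<and> (mu x y \<ge> 0 \<longleftrightarrow> u x - u y \<ge> 0)" by (rule case_prodD[OF bspec[OF G(4) xy]])
  have d2: "mu y x = - mu x y \<and> (mu y x \<ge> 0 \<longleftrightarrow> u y - u x \<ge> 0)" by (rule case_prodD[OF bspec[OF G(4) yx]])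
  have drift: "mu x y = - mu y x" "mu x y \<ge> 0 \<longleftrightarrow> u x - u y \<ge> 0" "mu y x \<ge> 0 \<longleftrightarrow> u y - u x \<ge> 0"
    using d1 d2 by auto
  have p1: "p x y = measure M (upper_chosen (mu x y) sg W b \<inter> space M)" by (rule case_prodD[OF bspec[OF G(5) xy]])
  have p2: "p y x = measure M (upper_chosen (mu y x) sg W b \<inter> space M)" by (rule case_prodD[OF bspec[OF G(5) yx]])
  have F1: "\<forall>t\<ge>0. F x y t = measure M (upper_by (mu x y) sg W b t \<inter> space M) /
        measure M (upper_chosen (mu x y) sg W b \<inter> space M)" by (rule case_prodD[OF bspec[OF G(6) xy]])
  have F2: "\<forall>t\<ge>0. F y x t = measure M (upper_by (mu y x) sg W b t \<inter> space M) /
        measure M (upper_chosen (mu y x) sg W b \<inter> space M)" by (rule case_prodD[OF bspec[OF G(6) yx]])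
  define \<mu> where "\<mu> = mu x y"
  have myx: "mu y x = - \<mu>" unfolding \<mu>_def using drift by simp
  have bp: "(\<forall>t\<ge>0. b t > 0)" "continuous_on {0..} b" "\<forall>s t. 0 \<le> s \<and> s \<le> t \<longrightarrow> b t \<le> b s"
    using bnd_props[OF bnd] by auto
  have bpos: "\<And>t. t \<ge> 0 \<Longrightarrow> b t > 0" using bp(1) by auto
  have Wm: "\<forall>t\<ge>0. W t \<in> borel_measurable M" using BM_meas[OF BM] by auto
  have Wc: "\<forall>\<omega>\<in>space M. W 0 \<omega> = 0 \<and> continuous_on {0..} (\<lambda>t. W t \<omega>)" using BM_path[OF BM] by auto
  define U where "U m t = measure M (upper_by m sg W b t \<inter> space M)" for m t
  define P where "P m = measure M (upper_chosen m sg W b \<inter> space M)" for m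
  have Ub: "upper_by m sg W b t \<inter> space M \<in> sets M" for m t by (rule upper_by_meas[OF Wm Wc bp(2) bpos])
  have Pc: "upper_chosen m sg W b \<inter> space M \<in> sets M" for m by (rule upper_chosen_meas[OF Wm Wc bp(2) bpos])
  have pxy: "p x y = P \<mu>" "p y x = P (- \<mu>)" unfolding P_def using p1 p2 myx by (simp_all add: \<mu>_def)
  have Fxy: "\<And>t. t \<ge> 0 \<Longrightarrow> F x y t = U \<mu> t / P \<mu>" "\<And>t. t \<ge> 0 \<Longrightarrow> F y x t = U (- \<mu>) t / P (- \<mu>)"
    unfolding U_def P_def using F1 F2 myx by (simp_all add: \<mu>_def)
  have UP: "U m t \<le> P m" for m t
    unfolding U_def P_def by (rule finite_measure_mono[OF _ Pc]) (auto simp: upper_by_def upper_chosen_def)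
  have U0: "0 \<le> U m t" for m t unfolding U_def by simp
  have P0: "0 \<le> P m" for m unfolding P_def by simp
  have incl: "upper_by (- \<mu>) sg W b t \<inter> space M \<subseteq> upper_by \<mu> sg W b t \<inter> space M" if mu0: "\<mu> \<ge> 0" for t
  proof
    fix \<omega> assume \<omega>: "\<omega> \<in> upper_by (- \<mu>) sg W b t \<inter> space M"
    then obtain s where s: "s \<in> {0..t}" "b s \<le> ddm_proc (- \<mu>) sg W s \<omega>"
      "\<forall>r\<in>{0..s}. - b r < ddm_proc (- \<mu>) sg W r \<omega>"
      using upper_by_D[OF BM _ bp(2) bpos] by blast
    have le: "ddm_proc (- \<mu>) sg W r \<omega> \<le> ddm_proc \<mu> sg W r \<omega>" if "r \<ge> 0" for r
      unfolding ddm_proc_def using mu0 that by simp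
    have "\<omega> \<in> upper_by \<mu> sg W b t"
    proof (rule in_upper_by[OF BM _ bp(2) bpos s(1)])
      show "\<omega> \<in> space M" using \<omega> by auto
      show "b s \<le> ddm_proc \<mu> sg W s \<omega>" using s(1,2) le[of s] by auto
      show "\<forall>r\<in>{0..s}. - b r < ddm_proc \<mu> sg W r \<omega>"
      proof
        fix r assume r: "r \<in> {0..s}"
        show "- b r < ddm_proc \<mu> sg W r \<omega>" using bspec[OF s(3) r] le[of r] r by simp
      qed
    qed
    thus "\<omega> \<in> upper_by \<mu> sg W b t \<inter> space M" using \<omega> by auto
  qed
  have Umono: "U (- \<mu>) t \<le> U \<mu> t" if "\<mu> \<ge> 0" for t
    unfolding U_def by (rule finite_measure_mono[OF incl[OF that] Ub])
  have part1: "q_FSD (p x y / p y x) (F y x) (F x y)" if "u x \<ge> u y"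
  proof -
    have mu0: "\<mu> \<ge> 0" unfolding \<mu>_def using drift(2) that by simp
    show ?thesis unfolding q_FSD_def
    proof (intro allI impI)
      fix t :: real assume t: "t \<ge> 0"
      show "F y x t \<le> p x y / p y x * F x y t"
        unfolding Fxy[OF t] pxy by (rule fsd_arith[OF U0 Umono[OF mu0] UP P0])
    qed
  qed
  have part2: "q_SFSD (p x y / p y x) (F y x) (F x y)" if uxy: "u x > u y"
  proof -
    have mu0: "\<mu> > 0"
    proof -
      have "\<not> mu y x \<ge> 0" using drift(3) uxy by simp
      thus ?thesis using myx by simp
    qed
    define m where "m = b 1"
    have m: "m > 0" unfolding m_def using bpos by simp
    have bm: "m \<le> b r" if "r \<in> {0..1}" for r unfolding m_def using bp(3) that by auto
    obtain GA where GA: "GA \<in> sets M" "0 < measure M GA" "GA \<subseteq> space M"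
      "\<forall>\<omega>\<in>GA. \<forall>r\<in>{0..1}. \<bar>W r \<omega> - (2 * m + \<mu>) / sg * r\<bar> \<le> m / (2 * sg)"
      using tube[OF BM _ zero_less_one, of "m / (2 * sg)" "(2 * m + \<mu>) / sg"] m sg by auto
    have GAsub: "GA \<subseteq> upper_chosen (- \<mu>) sg W b \<inter> space M"
    proof
      fix \<omega> assume \<omega>: "\<omega> \<in> GA"
      have \<omega>sp: "\<omega> \<in> space M" using \<omega> GA(3) by auto
      have low: "(2 * m + \<mu>) * r - m / 2 \<le> sg * W r \<omega>" if "r \<in> {0..1}" for r
      proof -
        have "\<bar>W r \<omega> - (2 * m + \<mu>) / sg * r\<bar> \<le> m / (2 * sg)" using GA(4) \<omega> that by blast
        hence "(2 * m + \<mu>) / sg * r - m / (2 * sg) \<le> W r \<omega>" by linarith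
        hence "sg * ((2 * m + \<mu>) / sg * r - m / (2 * sg)) \<le> sg * W r \<omega>" using sg by (intro mult_left_mono) auto
        moreover have "sg * ((2 * m + \<mu>) / sg * r - m / (2 * sg)) = (2 * m + \<mu>) * r - m / 2"
          using sg by (simp add: field_simps)
        ultimately show ?thesis by linarith
      qed
      have Z: "2 * m * r - m / 2 \<le> ddm_proc (- \<mu>) sg W r \<omega>" if "r \<in> {0..1}" for r
        using low[OF that] unfolding ddm_proc_def by (simp add: algebra_simps)
      have "\<omega> \<in> upper_by (- \<mu>) sg W b 1"
      proof (rule in_upper_by[OF BM \<omega>sp bp(2) bpos])
        show "(1::real) \<in> {0..1}" by simp
        show "b 1 \<le> ddm_proc (- \<mu>) sg W 1 \<omega>" using Z[of 1] m unfolding m_def by simp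
        show "\<forall>r\<in>{0..1}. - b r < ddm_proc (- \<mu>) sg W r \<omega>"
        proof
          fix r :: real assume r: "r \<in> {0..1}"
          have "- b r \<le> - m" using bm[OF r] by simp
          moreover have "0 \<le> 2 * m * r" using m r by simp
          hence "- m < 2 * m * r - m / 2" using m by linarith
          ultimately show "- b r < ddm_proc (- \<mu>) sg W r \<omega>" using Z[OF r] by linarith
        qed
      qed
      thus "\<omega> \<in> upper_chosen (- \<mu>) sg W b \<inter> space M"
        using \<omega>sp unfolding upper_by_def upper_chosen_def by auto
    qed
    have Ppos: "0 < P (- \<mu>)"
      unfolding P_def using GA(2) finite_measure_mono[OF GAsub Pc] by linarith
    define b0 where "b0 = b 0"
    have b0: "b0 > 0" unfolding b0_def using bpos by simp
    define T where "T = 2 * b0 / \<mu>"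
    have T: "T > 0" unfolding T_def using b0 mu0 by simp
    define w where "w = b T / 2"
    have w: "w > 0" unfolding w_def using bpos T by simp
    have bT: "2 * w \<le> b r" if "r \<in> {0..T}" for r unfolding w_def using bp(3) that by auto
    have wb0: "w \<le> b0 / 2" unfolding w_def b0_def using bp(3) T by auto
    obtain GB where GB: "GB \<in> sets M" "0 < measure M GB" "GB \<subseteq> space M"
      "\<forall>\<omega>\<in>GB. \<forall>r\<in>{0..T}. \<bar>W r \<omega> - 0 * r\<bar> \<le> w / (2 * sg)"
      using tube[OF BM _ T, of "w / (2 * sg)" 0] w sg by auto
    have GBsub: "GB \<subseteq> (upper_by \<mu> sg W b T \<inter> space M) - (upper_by (- \<mu>) sg W b T \<inter> space M)"
    proof
      fix \<omega> assume \<omega>: "\<omega> \<in> GB"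
      have \<omega>sp: "\<omega> \<in> space M" using \<omega> GB(3) by auto
      have sw: "\<bar>sg * W r \<omega>\<bar> \<le> w / 2" if "r \<in> {0..T}" for r
      proof -
        have "\<bar>W r \<omega> - 0 * r\<bar> \<le> w / (2 * sg)" using GB(4) \<omega> that by blast
        hence "\<bar>W r \<omega>\<bar> \<le> w / (2 * sg)" by simp
        hence "sg * \<bar>W r \<omega>\<bar> \<le> sg * (w / (2 * sg))" using sg by (intro mult_left_mono) auto
        thus ?thesis using sg by (simp add: abs_mult)
      qed
      have notin: "\<omega> \<notin> upper_by (- \<mu>) sg W b T"
      proof
        assume "\<omega> \<in> upper_by (- \<mu>) sg W b T"
        then obtain s where s: "s \<le> T" "first_hit_upper_at b (\<lambda>t. ddm_proc (- \<mu>) sg W t \<omega>) s"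
          unfolding upper_by_def by auto
        have s0: "0 \<le> s" and eq: "- \<mu> * s + sg * W s \<omega> = b s"
          using s(2) unfolding first_hit_upper_at_def ddm_proc_def by auto
        have "sg * W s \<omega> \<le> w / 2" using sw[of s] s0 s(1) by auto
        moreover have "0 \<le> \<mu> * s" using mu0 s0 by simp
        moreover have "2 * w \<le> b s" using bT[of s] s0 s(1) by auto
        ultimately show False using eq w by linarith
      qed
      have "\<omega> \<in> upper_by \<mu> sg W b T"
      proof (rule in_upper_by[OF BM \<omega>sp bp(2) bpos])
        show "T \<in> {0..T}" using T by simp
        have "sg * W T \<omega> \<ge> - (w / 2)" using sw[of T] T by auto
        moreover have "\<mu> * T = 2 * b0" unfolding T_def using mu0 by simp
        moreover have "b T \<le> b0" unfolding b0_def using bp(3) T by auto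
        ultimately show "b T \<le> ddm_proc \<mu> sg W T \<omega>" unfolding ddm_proc_def using wb0 b0 by linarith
        show "\<forall>r\<in>{0..T}. - b r < ddm_proc \<mu> sg W r \<omega>"
        proof
          fix r assume r: "r \<in> {0..T}"
          have "sg * W r \<omega> \<ge> - (w / 2)" using sw[OF r] by auto
          moreover have "0 \<le> \<mu> * r" using mu0 r by simp
          moreover have "2 * w \<le> b r" by (rule bT[OF r])
          ultimately show "- b r < ddm_proc \<mu> sg W r \<omega>" unfolding ddm_proc_def using w by linarith
        qed
      qed
      thus "\<omega> \<in> (upper_by \<mu> sg W b T \<inter> space M) - (upper_by (- \<mu>) sg W b T \<inter> space M)"
        using notin \<omega>sp by auto
    qed
    have "measure M ((upper_by \<mu> sg W b T \<inter> space M) - (upper_by (- \<mu>) sg W b T \<inter> space M))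
        = U \<mu> T - U (- \<mu>) T"
      unfolding U_def by (rule finite_measure_Diff[OF Ub Ub incl[OF less_imp_le[OF mu0]]])
    moreover have "measure M GB \<le> measure M ((upper_by \<mu> sg W b T \<inter> space M) - (upper_by (- \<mu>) sg W b T \<inter> space M))"
      by (rule finite_measure_mono[OF GBsub]) (use Ub in auto)
    ultimately have Ult: "U (- \<mu>) T < U \<mu> T" using GB(2) by linarith
    have "F y x T < p x y / p y x * F x y T"
      unfolding Fxy[OF less_imp_le[OF T]] pxy by (rule sfsd_arith[OF U0 Ult UP Ppos])
    hence "\<exists>t\<ge>0. F y x t < p x y / p y x * F x y t" using T by (intro exI[of _ T]) auto
    moreover have "q_FSD (p x y / p y x) (F y x) (F x y)" using part1 uxy by simp
    ultimately show ?thesis unfolding q_SFSD_def by simp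
  qed
  show ?thesis using part1 part2 by blast
qed

end
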